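(* The $\mathbf{k}$-linear map $\mathrm{WCQSym}\to \mathbf 1_{\mathbf k}\otimes \text{Ш}^+(x)\subseteq \text{Ш}(x)$, $M_\alpha\mapsto 1\otimes x^{\otimes\theta(\alpha)}$, is an algebra isomorphism; in particular $\mathrm{WCQSym}$ is isomorphic as an algebra to $\text{Ш}^+(x)$ (via $M_\alpha\mapsto x^{\otimes\theta(\alpha)}$) and to the subalgebra $\mathbf 1_{\mathbf k}\otimes\text{Ш}^+(x)$ of the free commutative unitary Rota--Baxter algebra $\text{Ш}(x)$ of weight $1$ generated by $x$. Moreover, $\mathrm{QSym}$ is (via this map) a subalgebra of $\text{Ш}(x)$, and $\mathrm{QSym}$ is a quotient Hopf algebra of $\mathbf 1_{\mathbf k}\otimes\text{Ш}^+(x)$ (endowed with the Hopf algebra structure transported from $\mathrm{WCQSym}$).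
   Context: $\mathbf{k}$ is a commutative ring containing $\mathbb{Q}$. $\tilde{\mathbb N}=\mathbb N\cup\{\varepsilon\}$ with $0+\varepsilon=\varepsilon+\varepsilon=\varepsilon$ and $n+\varepsilon=n$ for integers $n\ge1$. $\mathbf{k}[[X]]_{\tilde{\mathbb N}}$, for $X=\{x_1<x_2<\cdots\}$, is the algebra of possibly infinite linear combinations of formal monomials $\prod x_i^{f(x_i)}$ with $f$ finitely supported $\tilde{\mathbb N}$-valued, multiplied by adding exponents in $\tilde{\mathbb N}$. An $\tilde{\mathbb N}$-composition is a finite (possibly empty) sequence $\alpha=(\alpha_1,\dots,\alpha_k)$ of elements of $\{\varepsilon,1,2,\dots\}$; $M_\alpha=\sum_{1\le i_1<\cdots<i_k}x_{i_1}^{\alpha_1}\cdots x_{i_k}^{\alpha_k}$, $M_\emptyset=1$. $\mathrm{WCQSym}$ is the $\mathbf k$-span of the (linearly independent) $M_\alpha$; it is a Hopf algebra with the power series product, coproduct $\Delta(M_{(\alpha_1,\dots,\alpha_k)})=\sum_{i=0}^kM_{(\alpha_1,\dots,\alpha_i)}\otimes M_{(\alpha_{i+1},\dots,\alpha_k)}$, counit $\epsilon(M_\alpha)=\delta_{\alpha,\emptyset}$. $\mathrm{QSym}\subseteq\mathrm{WCQSym}$ is the span of $M_\alpha$ with all entries of $\alpha$ positive integers (the usual quasi-symmetric functions, with the same coproduct and counit). $\theta$ sends an $\tilde{\mathbb N}$-composition to the weak composition obtained by replacing each entry $\varepsilon$ by $0$. For a weak composition $\gamma=(\gamma_1,\dots,\gamma_k)$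 (sequence of nonnegative integers), $x^{\otimes\gamma}=x^{\gamma_1}\otimes\cdots\otimes x^{\gamma_k}\in\mathbf k[x]^{\otimes k}$, with $x^{\otimes\emptyset}=1\in\mathbf k$. $\text{Ш}^+(x)=\bigoplus_{k\ge0}\mathbf k[x]^{\otimes k}$ with the mixable shuffle product of weight $1$: $1*\mathfrak a=\mathfrak a*1=\mathfrak a$ and $(a_1\otimes\mathfrak a')*(b_1\otimes\mathfrak b')=a_1\otimes(\mathfrak a'*(b_1\otimes\mathfrak b'))+b_1\otimes((a_1\otimes\mathfrak a')*\mathfrak b')+(a_1b_1)\otimes(\mathfrak a'*\mathfrak b')$. $\text{Ш}(x)=\mathbf k[x]\otimes\text{Ш}^+(x)=\bigoplus_{k\ge1}\mathbf k[x]^{\otimes k}$ with product $(a_0\otimes\mathfrak a)\diamond(b_0\otimes\mathfrak b)=(a_0b_0)\otimes(\mathfrak a*\mathfrak b)$ and operator $P(\mathfrak a)=1\otimes\mathfrak a$; it is known to be the free commutative unitary Rota--Baxter algebra of weight $1$ on $x$. *)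

theory Defs
  imports Main
begin

datatype ntilde = Eps | Nat nat

fun addN :: "ntilde \<Rightarrow> ntilde \<Rightarrow> ntilde" where
  "addN (Nat a) (Nat b) = Nat (a + b)"
| "addN Eps (Nat n) = (if n = 0 then Eps else Nat n)"
| "addN (Nat n) Eps = (if n = 0 then Eps else Nat n)"
| "addN Eps Eps = Eps"

text \<open>A monomial is an exponent function nat => ntilde (finitely supported);
  a series is its coefficient function.\<close>

type_synonym expo = "nat \<Rightarrow> ntilde"
type_synonym 'a ser = "expo \<Rightarrow> 'a"

definition esupp :: "expo \<Rightarrow> nat set" where
  "esupp m = {i. m i \<noteq> Nat 0}"

definition addf :: "expo \<Rightarrow> expo \<Rightarrow> expo" where
  "addf a b = (\<lambda>i. addN (a i) (b i))"

text \<open>Product of power series (finite sum for finitely supported m).\<close>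
definition ser_mult :: "'a::comm_ring_1 ser \<Rightarrow> 'a ser \<Rightarrow> 'a ser" where
  "ser_mult F G = (\<lambda>m. \<Sum>p\<in>{(a, b). addf a b = m}. F (fst p) * G (snd p))"

definition ser_one :: "'a::comm_ring_1 ser" where
  "ser_one = (\<lambda>m. if m = (\<lambda>_. Nat 0) then 1 else 0)"

definition is_ncomp :: "ntilde list \<Rightarrow> bool" where
  "is_ncomp \<alpha> \<longleftrightarrow> Nat 0 \<notin> set \<alpha>"

definition is_comp :: "ntilde list \<Rightarrow> bool" where
  "is_comp \<alpha> \<longleftrightarrow> (\<forall>e\<in>set \<alpha>. \<exists>n. e = Nat (Suc n))"

definition M :: "ntilde list \<Rightarrow> 'a::comm_ring_1 ser" where
  "M \<alpha> = (\<lambda>m. if finite (esupp m) \<and> map m (sorted_list_of_set (esupp m)) = \<alpha>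
               then 1 else 0)"

definition WCQSym :: "'a::comm_ring_1 ser set" where
  "WCQSym = {F. \<exists>A c. finite A \<and> A \<subseteq> {\<alpha>. is_ncomp \<alpha>} \<and>
                       F = (\<lambda>m. \<Sum>\<alpha>\<in>A. c \<alpha> * M \<alpha> m)}"

definition QSym :: "'a::comm_ring_1 ser set" where
  "QSym = {F. \<exists>A c. finite A \<and> A \<subseteq> {\<alpha>. is_comp \<alpha>} \<and>
                     F = (\<lambda>m. \<Sum>\<alpha>\<in>A. c \<alpha> * M \<alpha> m)}"

definition theta :: "ntilde list \<Rightarrow> nat list" where
  "theta \<alpha> = map (\<lambda>e. case e of Eps \<Rightarrow> 0 | Nat n \<Rightarrow> n) \<alpha>"

text \<open>Coefficient of M_alpha in an element of WCQSym: since M_alpha is the only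
  M_beta containing the monomial x_0^{alpha_1} ... x_{k-1}^{alpha_k}, it is the
  coefficient of that monomial.\<close>
definition canon :: "ntilde list \<Rightarrow> expo" where
  "canon \<alpha> = (\<lambda>i. if i < length \<alpha> then \<alpha> ! i else Nat 0)"

definition coeffM :: "'a::comm_ring_1 ser \<Rightarrow> ntilde list \<Rightarrow> 'a" where
  "coeffM F \<alpha> = F (canon \<alpha>)"

definition csupp :: "'a::comm_ring_1 ser \<Rightarrow> ntilde list set" where
  "csupp F = {\<alpha>. is_ncomp \<alpha> \<and> coeffM F \<alpha> \<noteq> 0}"

text \<open>Elements of the tensor square are encoded as series in two alphabets:
  F \<otimes> H is (m,n) \<mapsto> F m * H n.\<close>
definition tens :: "'a::comm_ring_1 ser \<Rightarrow> 'a ser \<Rightarrow> (expo \<times> expo \<Rightarrow> 'a)" where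
  "tens F H = (\<lambda>p. F (fst p) * H (snd p))"

definition wcDelta :: "'a::comm_ring_1 ser \<Rightarrow> (expo \<times> expo \<Rightarrow> 'a)" where
  "wcDelta F = (\<lambda>p. \<Sum>\<alpha>\<in>csupp F. coeffM F \<alpha> *
      (\<Sum>i\<le>length \<alpha>. M (take i \<alpha>) (fst p) * M (drop i \<alpha>) (snd p)))"

definition wcCounit :: "'a::comm_ring_1 ser \<Rightarrow> 'a" where
  "wcCounit F = coeffM F []"

text \<open>k[x]^{\<otimes>k} has basis x^{\<otimes>gamma}, gamma a weak composition of length k;
  elements of Sha^+(x) are finitely supported coefficient functions on nat lists.
  msh u v lists (with multiplicity) the basis words of x^{\<otimes>u} * x^{\<otimes>v}.\<close>

fun msh :: "nat list \<Rightarrow> nat list \<Rightarrow> nat list list" where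
  "msh [] ys = [ys]"
| "msh xs [] = [xs]"
| "msh (x # xs) (y # ys) =
     map ((#) x) (msh xs (y # ys)) @ map ((#) y) (msh (x # xs) ys) @ map ((#) (x + y)) (msh xs ys)"

fun dmd :: "nat list \<Rightarrow> nat list \<Rightarrow> nat list list" where
  "dmd (a # u) (b # v) = map ((#) (a + b)) (msh u v)"
| "dmd _ _ = []"

type_synonym 'a sh = "nat list \<Rightarrow> 'a"

definition wsupp :: "'a::comm_ring_1 sh \<Rightarrow> nat list set" where
  "wsupp f = {w. f w \<noteq> 0}"

definition basis_el :: "nat list \<Rightarrow> 'a::comm_ring_1 sh" where
  "basis_el u = (\<lambda>w. if w = u then 1 else 0)"

definition ShaPlus :: "'a::comm_ring_1 sh set" where
  "ShaPlus = {f. finite (wsupp f)}"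

definition Sha :: "'a::comm_ring_1 sh set" where
  "Sha = {f. finite (wsupp f) \<and> f [] = 0}"

definition OneSha :: "'a::comm_ring_1 sh set" where
  "OneSha = {f. finite (wsupp f) \<and> (\<forall>w. f w \<noteq> 0 \<longrightarrow> (\<exists>\<gamma>. w = 0 # \<gamma>))}"

definition star :: "'a::comm_ring_1 sh \<Rightarrow> 'a sh \<Rightarrow> 'a sh" where
  "star f g = (\<lambda>w. \<Sum>u\<in>wsupp f. \<Sum>v\<in>wsupp g. f u * g v * of_nat (count_list (msh u v) w))"

definition diamond :: "'a::comm_ring_1 sh \<Rightarrow> 'a sh \<Rightarrow> 'a sh" where
  "diamond f g = (\<lambda>w. \<Sum>u\<in>wsupp f. \<Sum>v\<in>wsupp g. f u * g v * of_nat (count_list (dmd u v) w))"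

definition phi :: "'a::comm_ring_1 ser \<Rightarrow> 'a sh" where
  "phi F = (\<lambda>w. \<Sum>\<alpha>\<in>csupp F. coeffM F \<alpha> * basis_el (0 # theta \<alpha>) w)"

definition psi :: "'a::comm_ring_1 ser \<Rightarrow> 'a sh" where
  "psi F = (\<lambda>w. \<Sum>\<alpha>\<in>csupp F. coeffM F \<alpha> * basis_el (theta \<alpha>) w)"

end

theory Submission
  imports Defs
begin


definition th :: "ntilde \<Rightarrow> nat" where
  "th e = (case e of Eps \<Rightarrow> 0 | Nat n \<Rightarrow> n)"
definition thinv :: "nat \<Rightarrow> ntilde" where
  "thinv n = (if n = 0 then Eps else Nat n)"
definition patm :: "expo \<Rightarrow> ntilde list" where
  "patm m = map m (sorted_list_of_set (esupp m))"
definition pat :: "ntilde list \<Rightarrow> ntilde list" where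
  "pat = filter (\<lambda>x. x \<noteq> Nat 0)"
definition tofun :: "ntilde list \<Rightarrow> expo" where
  "tofun x = (\<lambda>i. if i < length x then x ! i else Nat 0)"
definition wc :: "'a::comm_ring_1 ser \<Rightarrow> bool" where
  "wc F \<longleftrightarrow> finite (csupp F) \<and> (\<forall>m. F m = (if finite (esupp m) then coeffM F (patm m) else 0))"

lemma theta_th: "theta \<alpha> = map th \<alpha>"
  by (simp add: theta_def th_def)

lemma th_thinv[simp]: "th (thinv n) = n"
  by (simp add: th_def thinv_def)

lemma thinv_th: "x \<noteq> Nat 0 \<Longrightarrow> thinv (th x) = x"
  by (cases x) (auto simp: th_def thinv_def)

lemma thinv_nz[simp]: "thinv n \<noteq> Nat 0"
  by (simp add: thinv_def)

lemma th_inj: "x \<noteq> Nat 0 \<Longrightarrow> y \<noteq> Nat 0 \<Longrightarrow> th x = th y \<longleftrightarrow> x = y"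
  by (metis thinv_th)

lemma thinv_nz'[simp]: "Nat 0 \<noteq> thinv n"
  by (simp add: thinv_def)

lemma ncomp_thinv[simp]: "is_ncomp (map thinv \<gamma>)"
  by (auto simp: is_ncomp_def)

lemma theta_thinv[simp]: "theta (map thinv \<gamma>) = \<gamma>"
  by (simp add: theta_th comp_def)

lemma thinv_theta: "is_ncomp \<alpha> \<Longrightarrow> map thinv (theta \<alpha>) = \<alpha>"
  by (auto simp: theta_th is_ncomp_def intro!: map_idI thinv_th)

lemma theta_inj: "is_ncomp \<alpha> \<Longrightarrow> is_ncomp \<beta> \<Longrightarrow> theta \<alpha> = theta \<beta> \<longleftrightarrow> \<alpha> = \<beta>"
  by (metis thinv_theta)

lemma theta_eq_iff: "is_ncomp \<alpha> \<Longrightarrow> theta \<alpha> = \<gamma> \<longleftrightarrow> \<alpha> = map thinv \<gamma>"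
  by (metis thinv_theta theta_thinv)

lemma ncomp_patm: "is_ncomp (patm m)"
  by (cases "finite (esupp m)") (auto simp: is_ncomp_def patm_def esupp_def)

lemma sorted_esupp:
  assumes "esupp m \<subseteq> {..<n}"
  shows "sorted_list_of_set (esupp m) = filter (\<lambda>i. m i \<noteq> Nat 0) [0..<n]"
proof -
  define xs where "xs = filter (\<lambda>i. m i \<noteq> Nat 0) [0..<n]"
  have 1: "esupp m = set xs"
    using assms by (auto simp: esupp_def xs_def)
  have 2: "sorted_list_of_set (set xs) = xs"
    unfolding xs_def
    by (rule sorted_list_of_set.idem_if_sorted_distinct) (auto intro: sorted_wrt_filter)
  show ?thesis unfolding xs_def[symmetric] 1 2 by (rule refl)
qed

lemma patm_list:
  assumes "esupp m \<subseteq> {..<n}"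
  shows "patm m = pat (map m [0..<n])"
  using sorted_esupp[OF assms] by (simp add: patm_def pat_def filter_map comp_def)

lemma esupp_canon: "is_ncomp \<gamma> \<Longrightarrow> esupp (canon \<gamma>) = {..<length \<gamma>}"
  by (auto simp: esupp_def canon_def is_ncomp_def dest: nth_mem)

lemma map_canon: "map (canon \<gamma>) [0..<length \<gamma>] = \<gamma>"
  by (rule nth_equalityI) (auto simp: canon_def)

lemma pat_ncomp: "is_ncomp \<gamma> \<Longrightarrow> pat \<gamma> = \<gamma>"
  by (auto simp: pat_def is_ncomp_def intro: filter_True)

lemma patm_canon: "is_ncomp \<gamma> \<Longrightarrow> patm (canon \<gamma>) = \<gamma>"
  using patm_list[of "canon \<gamma>" "length \<gamma>"] esupp_canon[of \<gamma>] map_canon[of \<gamma>] pat_ncomp[of \<gamma>]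
  by simp

lemma finite_esupp_canon: "finite (esupp (canon \<gamma>))"
  by (rule finite_subset[of _ "{..<length \<gamma>}"]) (auto simp: esupp_def canon_def split: if_splits)

lemma M_alt: "M \<alpha> m = (if finite (esupp m) \<and> patm m = \<alpha> then 1 else 0)"
  by (simp add: M_def patm_def)

lemma M_canon: "is_ncomp \<gamma> \<Longrightarrow> M \<alpha> (canon \<gamma>) = (if \<gamma> = \<alpha> then 1 else 0)"
  by (simp add: M_alt patm_canon finite_esupp_canon)



lemma sum_M_coeff:
  fixes c :: "ntilde list \<Rightarrow> 'a::comm_ring_1"
  assumes "finite A" "A \<subseteq> {\<alpha>. is_ncomp \<alpha>}" "is_ncomp \<gamma>"
  shows "coeffM (\<lambda>m. \<Sum>\<alpha>\<in>A. c \<alpha> * M \<alpha> m) \<gamma> = (if \<gamma> \<in> A then c \<gamma> else 0)"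
proof -
  have "coeffM (\<lambda>m. \<Sum>\<alpha>\<in>A. c \<alpha> * M \<alpha> m) \<gamma> = (\<Sum>\<alpha>\<in>A. if \<gamma> = \<alpha> then c \<alpha> else 0)"
    unfolding coeffM_def using assms by (intro sum.cong) (auto simp: M_canon)
  also have "\<dots> = (if \<gamma> \<in> A then c \<gamma> else 0)"
    using assms(1) by (simp add: sum.delta)
  finally show ?thesis .
qed

lemma sum_M_eval:
  fixes c :: "ntilde list \<Rightarrow> 'a::comm_ring_1"
  assumes "finite A"
  shows "(\<Sum>\<alpha>\<in>A. c \<alpha> * M \<alpha> m) = (if finite (esupp m) \<and> patm m \<in> A then c (patm m) else 0)"
proof -
  have "(\<Sum>\<alpha>\<in>A. c \<alpha> * M \<alpha> m) = (\<Sum>\<alpha>\<in>A. if finite (esupp m) \<and> patm m = \<alpha> then c \<alpha> else 0)"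
    by (intro sum.cong) (auto simp: M_alt)
  also have "\<dots> = (if finite (esupp m) \<and> patm m \<in> A then c (patm m) else 0)"
    using assms by (cases "finite (esupp m)") (simp_all add: sum.delta)
  finally show ?thesis .
qed

lemma wc_sumI:
  fixes c :: "ntilde list \<Rightarrow> 'a::comm_ring_1"
  assumes "finite A" "A \<subseteq> {\<alpha>. is_ncomp \<alpha>}"
  shows "wc (\<lambda>m. \<Sum>\<alpha>\<in>A. c \<alpha> * M \<alpha> m)" and "csupp (\<lambda>m. \<Sum>\<alpha>\<in>A. c \<alpha> * M \<alpha> m) \<subseteq> A"
proof -
  show cs: "csupp (\<lambda>m. \<Sum>\<alpha>\<in>A. c \<alpha> * M \<alpha> m) \<subseteq> A"
  proof
    fix x assume "x \<in> csupp (\<lambda>m. \<Sum>\<alpha>\<in>A. c \<alpha> * M \<alpha> m)"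
    then have "is_ncomp x" "coeffM (\<lambda>m. \<Sum>\<alpha>\<in>A. c \<alpha> * M \<alpha> m) x \<noteq> 0"
      by (auto simp: csupp_def)
    then show "x \<in> A" using sum_M_coeff[OF assms, where c=c] by (auto split: if_splits)
  qed
  show "wc (\<lambda>m. \<Sum>\<alpha>\<in>A. c \<alpha> * M \<alpha> m)"
    unfolding wc_def
  proof (intro conjI allI)
    show "finite (csupp (\<lambda>m. \<Sum>\<alpha>\<in>A. c \<alpha> * M \<alpha> m))"
      using cs assms(1) finite_subset by blast
    fix m
    show "(\<Sum>\<alpha>\<in>A. c \<alpha> * M \<alpha> m) = (if finite (esupp m) then coeffM (\<lambda>m. \<Sum>\<alpha>\<in>A. c \<alpha> * M \<alpha> m) (patm m) else 0)"
      using sum_M_eval[OF assms(1), of c m] sum_M_coeff[OF assms ncomp_patm[of m], of c] by simp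
  qed
qed

lemma wc_repr:
  fixes F :: "'a::comm_ring_1 ser"
  assumes "wc F"
  shows "F = (\<lambda>m. \<Sum>\<alpha>\<in>csupp F. coeffM F \<alpha> * M \<alpha> m)"
proof
  fix m
  have fin: "finite (csupp F)" using assms by (simp add: wc_def)
  have "(\<Sum>\<alpha>\<in>csupp F. coeffM F \<alpha> * M \<alpha> m) = (if finite (esupp m) \<and> patm m \<in> csupp F then coeffM F (patm m) else 0)"
    by (rule sum_M_eval[OF fin])
  also have "\<dots> = F m"
    using assms ncomp_patm[of m] by (auto simp: wc_def csupp_def)
  finally show "F m = (\<Sum>\<alpha>\<in>csupp F. coeffM F \<alpha> * M \<alpha> m)" by simp
qed

lemma WCQSym_eq: "WCQSym = {F. wc F}"
proof (intro set_eqI iffI)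
  fix F :: "'a ser"
  assume "F \<in> WCQSym"
  then obtain A c where "finite A" "A \<subseteq> {\<alpha>. is_ncomp \<alpha>}" "F = (\<lambda>m. \<Sum>\<alpha>\<in>A. c \<alpha> * M \<alpha> m)"
    by (auto simp: WCQSym_def)
  then show "F \<in> {F. wc F}" using wc_sumI by blast
next
  fix F :: "'a ser"
  assume "F \<in> {F. wc F}"
  then have "wc F" by simp
  then show "F \<in> WCQSym"
    unfolding WCQSym_def using wc_repr[of F] by (auto simp: wc_def csupp_def)
qed

lemma QSym_eq: "QSym = {F. wc F \<and> csupp F \<subseteq> {\<alpha>. is_comp \<alpha>}}"
proof (intro set_eqI iffI)
  have cn: "{\<alpha>. is_comp \<alpha>} \<subseteq> {\<alpha>. is_ncomp \<alpha>}"
    by (auto simp: is_comp_def is_ncomp_def)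
  fix F :: "'a ser"
  {
    assume "F \<in> QSym"
    then obtain A c where "finite A" "A \<subseteq> {\<alpha>. is_comp \<alpha>}" "F = (\<lambda>m. \<Sum>\<alpha>\<in>A. c \<alpha> * M \<alpha> m)"
      by (auto simp: QSym_def)
    then show "F \<in> {F. wc F \<and> csupp F \<subseteq> {\<alpha>. is_comp \<alpha>}}" using wc_sumI[of A] cn by blast
  }
  {
    assume "F \<in> {F. wc F \<and> csupp F \<subseteq> {\<alpha>. is_comp \<alpha>}}"
    then have "wc F" "csupp F \<subseteq> {\<alpha>. is_comp \<alpha>}" by auto
    then show "F \<in> QSym"
      unfolding QSym_def using wc_repr[of F] by (auto simp: wc_def)
  }
qed

lemma coeffM_lin: "coeffM (\<lambda>m. c * F m + G m) \<gamma> = c * coeffM F \<gamma> + coeffM G \<gamma>"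
  by (simp add: coeffM_def)

lemma wc_lin:
  fixes F G :: "'a::comm_ring_1 ser"
  assumes "wc F" "wc G"
  shows "wc (\<lambda>m. c * F m + G m)" "csupp (\<lambda>m. c * F m + G m) \<subseteq> csupp F \<union> csupp G"
proof -
  show cs: "csupp (\<lambda>m. c * F m + G m) \<subseteq> csupp F \<union> csupp G"
    by (auto simp: csupp_def coeffM_lin)
  show "wc (\<lambda>m. c * F m + G m)"
    unfolding wc_def
  proof (intro conjI allI)
    show "finite (csupp (\<lambda>m. c * F m + G m))"
      using cs assms by (meson finite_Un finite_subset wc_def)
    fix m show "c * F m + G m = (if finite (esupp m) then coeffM (\<lambda>m. c * F m + G m) (patm m) else 0)"
      using assms unfolding wc_def coeffM_lin by (metis mult_zero_right add_0)
  qed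
qed

lemma M_single: "M \<alpha> = (\<lambda>m. \<Sum>\<beta>\<in>{\<alpha>}. (\<lambda>_. 1) \<beta> * M \<beta> m)"
  by simp

lemma wc_M: "is_ncomp \<alpha> \<Longrightarrow> wc (M \<alpha> :: 'a::comm_ring_1 ser)"
  by (subst M_single, rule wc_sumI) auto

lemma csupp_M: "is_ncomp \<alpha> \<Longrightarrow> csupp (M \<alpha> :: 'a::comm_ring_1 ser) \<subseteq> {\<alpha>}"
  by (subst M_single, rule wc_sumI) auto

lemma coeffM_M: "is_ncomp \<alpha> \<Longrightarrow> is_ncomp \<gamma> \<Longrightarrow> coeffM (M \<alpha> :: 'a::comm_ring_1 ser) \<gamma> = (if \<gamma> = \<alpha> then 1 else 0)"
  by (simp add: coeffM_def M_canon)

lemma wc_ext: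
  fixes F G :: "'a::comm_ring_1 ser"
  assumes "wc F" "wc G" "\<And>\<gamma>. is_ncomp \<gamma> \<Longrightarrow> coeffM F \<gamma> = coeffM G \<gamma>"
  shows "F = G"
proof
  fix m show "F m = G m" using assms ncomp_patm[of m] unfolding wc_def by metis
qed



lemma phi_eval:
  fixes F :: "'a::comm_ring_1 ser"
  assumes "finite (csupp F)"
  shows "phi F w = (case w of [] \<Rightarrow> 0 | x # \<gamma> \<Rightarrow> if x = 0 then coeffM F (map thinv \<gamma>) else 0)"
proof -
  have "phi F w = (\<Sum>\<alpha>\<in>csupp F. if 0 # theta \<alpha> = w then coeffM F \<alpha> else 0)"
    unfolding phi_def by (intro sum.cong) (auto simp: basis_el_def)
  also have "\<dots> = (case w of [] \<Rightarrow> 0 | x # \<gamma> \<Rightarrow> if x = 0 then coeffM F (map thinv \<gamma>) else 0)"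
  proof (cases w)
    case (Cons x \<gamma>)
    show ?thesis
    proof (cases "x = 0")
      case True
      have "(\<Sum>\<alpha>\<in>csupp F. if 0 # theta \<alpha> = w then coeffM F \<alpha> else 0)
          = (\<Sum>\<alpha>\<in>csupp F. if \<alpha> = map thinv \<gamma> then coeffM F \<alpha> else 0)"
        using Cons True by (intro sum.cong) (auto simp: csupp_def theta_eq_iff)
      also have "\<dots> = coeffM F (map thinv \<gamma>)"
        using assms by (simp add: sum.delta' csupp_def)
      finally show ?thesis using Cons True by simp
    qed (auto simp: Cons)
  qed auto
  finally show ?thesis .
qed

lemma psi_eval:
  fixes F :: "'a::comm_ring_1 ser"
  assumes "finite (csupp F)"
  shows "psi F w = coeffM F (map thinv w)"
proof -
  have "psi F w = (\<Sum>\<alpha>\<in>csupp F. if theta \<alpha> = w then coeffM F \<alpha> else 0)"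
    unfolding psi_def by (intro sum.cong) (auto simp: basis_el_def)
  also have "\<dots> = (\<Sum>\<alpha>\<in>csupp F. if \<alpha> = map thinv w then coeffM F \<alpha> else 0)"
    by (intro sum.cong) (auto simp: csupp_def theta_eq_iff)
  also have "\<dots> = coeffM F (map thinv w)"
    using assms by (simp add: sum.delta' csupp_def)
  finally show ?thesis .
qed

lemma wc_fin: "wc F \<Longrightarrow> finite (csupp F)"
  by (simp add: wc_def)

lemma phi_M:
  assumes "is_ncomp \<alpha>"
  shows "phi (M \<alpha> :: 'a::comm_ring_1 ser) = basis_el (0 # theta \<alpha>)"
proof
  fix w
  have f: "finite (csupp (M \<alpha> :: 'a ser))" using wc_M[OF assms] wc_fin by blast
  show "phi (M \<alpha> :: 'a ser) w = basis_el (0 # theta \<alpha>) w"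
    unfolding phi_eval[OF f] using assms
    by (auto simp: coeffM_M basis_el_def theta_eq_iff thinv_theta split: list.splits)
qed

lemma psi_M:
  assumes "is_ncomp \<alpha>"
  shows "psi (M \<alpha> :: 'a::comm_ring_1 ser) = basis_el (theta \<alpha>)"
proof
  fix w
  have f: "finite (csupp (M \<alpha> :: 'a ser))" using wc_M[OF assms] wc_fin by blast
  show "psi (M \<alpha> :: 'a ser) w = basis_el (theta \<alpha>) w"
    unfolding psi_eval[OF f] using assms
    by (auto simp: coeffM_M basis_el_def theta_eq_iff thinv_theta)
qed

lemma phi_lin:
  fixes F G :: "'a::comm_ring_1 ser"
  assumes "wc F" "wc G"
  shows "phi (\<lambda>m. c * F m + G m) = (\<lambda>w. c * phi F w + phi G w)"
proof
  fix w
  have f: "finite (csupp (\<lambda>m. c * F m + G m))" using wc_lin[OF assms] wc_fin by blast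
  show "phi (\<lambda>m. c * F m + G m) w = c * phi F w + phi G w"
    unfolding phi_eval[OF f] phi_eval[OF wc_fin[OF assms(1)]] phi_eval[OF wc_fin[OF assms(2)]]
    by (auto simp: coeffM_lin split: list.splits)
qed

lemma psi_lin:
  fixes F G :: "'a::comm_ring_1 ser"
  assumes "wc F" "wc G"
  shows "psi (\<lambda>m. c * F m + G m) = (\<lambda>w. c * psi F w + psi G w)"
proof
  fix w
  have f: "finite (csupp (\<lambda>m. c * F m + G m))" using wc_lin[OF assms] wc_fin by blast
  show "psi (\<lambda>m. c * F m + G m) w = c * psi F w + psi G w"
    unfolding psi_eval[OF f] psi_eval[OF wc_fin[OF assms(1)]] psi_eval[OF wc_fin[OF assms(2)]]
    by (simp add: coeffM_lin)
qed

lemma wsupp_phi: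
  fixes F :: "'a::comm_ring_1 ser"
  assumes "finite (csupp F)"
  shows "wsupp (phi F) = (\<lambda>\<alpha>. 0 # theta \<alpha>) ` csupp F"
proof (intro set_eqI iffI)
  fix w assume "w \<in> wsupp (phi F)"
  then obtain \<gamma> where w: "w = 0 # \<gamma>" "coeffM F (map thinv \<gamma>) \<noteq> 0"
    by (auto simp: wsupp_def phi_eval[OF assms] split: list.splits if_splits)
  then show "w \<in> (\<lambda>\<alpha>. 0 # theta \<alpha>) ` csupp F"
    by (intro image_eqI[of _ _ "map thinv \<gamma>"]) (auto simp: csupp_def)
next
  fix w assume "w \<in> (\<lambda>\<alpha>. 0 # theta \<alpha>) ` csupp F"
  then obtain \<alpha> where "w = 0 # theta \<alpha>" "\<alpha> \<in> csupp F" by auto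
  then show "w \<in> wsupp (phi F)"
    by (auto simp: wsupp_def phi_eval[OF assms] csupp_def thinv_theta)
qed

lemma wsupp_psi:
  fixes F :: "'a::comm_ring_1 ser"
  assumes "finite (csupp F)"
  shows "wsupp (psi F) = theta ` csupp F"
proof (intro set_eqI iffI)
  fix w assume "w \<in> wsupp (psi F)"
  then have "coeffM F (map thinv w) \<noteq> 0"
    by (auto simp: wsupp_def psi_eval[OF assms])
  then show "w \<in> theta ` csupp F"
    by (intro image_eqI[of _ _ "map thinv w"]) (auto simp: csupp_def)
next
  fix w assume "w \<in> theta ` csupp F"
  then obtain \<alpha> where "w = theta \<alpha>" "\<alpha> \<in> csupp F" by auto
  then show "w \<in> wsupp (psi F)"
    by (auto simp: wsupp_def psi_eval[OF assms] csupp_def thinv_theta)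
qed

lemma phi_OneSha:
  fixes F :: "'a::comm_ring_1 ser"
  assumes "finite (csupp F)"
  shows "phi F \<in> OneSha"
  unfolding OneSha_def
  using wsupp_phi[OF assms] assms
  by (auto simp: phi_eval[OF assms] split: list.splits if_splits)

lemma psi_ShaPlus:
  fixes F :: "'a::comm_ring_1 ser"
  assumes "finite (csupp F)"
  shows "psi F \<in> ShaPlus"
  unfolding ShaPlus_def using wsupp_psi[OF assms] assms by auto

lemma phi_inj: "inj_on phi (WCQSym :: 'a::comm_ring_1 ser set)"
proof (rule inj_onI)
  fix F G :: "'a ser"
  assume F: "F \<in> WCQSym" and G: "G \<in> WCQSym" and e: "phi F = phi G"
  have wF: "wc F" and wG: "wc G" using F G by (auto simp: WCQSym_eq)
  show "F = G"
  proof (rule wc_ext[OF wF wG])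
    fix \<gamma> assume "is_ncomp \<gamma>"
    have "phi F (0 # theta \<gamma>) = phi G (0 # theta \<gamma>)" using e by simp
    then show "coeffM F \<gamma> = coeffM G \<gamma>"
      using \<open>is_ncomp \<gamma>\<close>
      by (simp add: phi_eval[OF wc_fin[OF wF]] phi_eval[OF wc_fin[OF wG]] thinv_theta)
  qed
qed

lemma psi_inj: "inj_on psi (WCQSym :: 'a::comm_ring_1 ser set)"
proof (rule inj_onI)
  fix F G :: "'a ser"
  assume F: "F \<in> WCQSym" and G: "G \<in> WCQSym" and e: "psi F = psi G"
  have wF: "wc F" and wG: "wc G" using F G by (auto simp: WCQSym_eq)
  show "F = G"
  proof (rule wc_ext[OF wF wG])
    fix \<gamma> assume "is_ncomp \<gamma>"
    have "psi F (theta \<gamma>) = psi G (theta \<gamma>)" using e by simp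
    then show "coeffM F \<gamma> = coeffM G \<gamma>"
      using \<open>is_ncomp \<gamma>\<close>
      by (simp add: psi_eval[OF wc_fin[OF wF]] psi_eval[OF wc_fin[OF wG]] thinv_theta)
  qed
qed

definition lift :: "(ntilde list \<Rightarrow> 'a::comm_ring_1) \<Rightarrow> 'a ser" where
  "lift h = (\<lambda>m. if finite (esupp m) then h (patm m) else 0)"

lemma lift_coeff: "is_ncomp \<gamma> \<Longrightarrow> coeffM (lift h) \<gamma> = h \<gamma>"
  by (simp add: lift_def coeffM_def finite_esupp_canon patm_canon)

lemma wc_lift:
  assumes "finite {\<gamma>. is_ncomp \<gamma> \<and> h \<gamma> \<noteq> 0}"
  shows "wc (lift h)"
  unfolding wc_def
proof (intro conjI allI)
  have "csupp (lift h) = {\<gamma>. is_ncomp \<gamma> \<and> h \<gamma> \<noteq> 0}"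
    by (auto simp: csupp_def lift_coeff)
  then show "finite (csupp (lift h))" using assms by simp
  fix m show "lift h m = (if finite (esupp m) then coeffM (lift h) (patm m) else 0)"
    using lift_coeff[OF ncomp_patm[of m], of h] by (simp add: lift_def)
qed

lemma finite_thinv_pre:
  assumes "finite W"
  shows "finite {\<gamma>. is_ncomp \<gamma> \<and> theta \<gamma> \<in> W}"
proof -
  have "{\<gamma>. is_ncomp \<gamma> \<and> theta \<gamma> \<in> W} \<subseteq> (map thinv) ` W"
    by (auto simp: thinv_theta intro!: image_eqI)
  then show ?thesis using assms finite_subset by blast
qed

lemma phi_surj: "phi ` (WCQSym :: 'a::comm_ring_1 ser set) = OneSha"
proof (intro set_eqI iffI)
  fix f :: "'a sh" assume "f \<in> phi ` WCQSym"
  then show "f \<in> OneSha" using phi_OneSha by (auto simp: WCQSym_eq wc_def)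
next
  fix f :: "'a sh" assume f: "f \<in> OneSha"
  define h where "h = (\<lambda>\<gamma>. f (0 # theta \<gamma>))"
  have "{\<gamma>. is_ncomp \<gamma> \<and> h \<gamma> \<noteq> 0} \<subseteq> {\<gamma>. is_ncomp \<gamma> \<and> theta \<gamma> \<in> tl ` wsupp f}"
    by (auto simp: h_def wsupp_def intro!: image_eqI)
  moreover have "finite {\<gamma>. is_ncomp \<gamma> \<and> theta \<gamma> \<in> tl ` wsupp f}"
    using f by (intro finite_thinv_pre) (auto simp: OneSha_def)
  ultimately have w: "wc (lift h)" using finite_subset wc_lift by blast
  have "phi (lift h) = f"
  proof
    fix w
    show "phi (lift h) w = f w"
      unfolding phi_eval[OF wc_fin[OF w]] using f
      by (auto simp: lift_coeff h_def OneSha_def split: list.splits)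
  qed
  then show "f \<in> phi ` WCQSym" using w by (auto simp: WCQSym_eq)
qed

lemma psi_surj: "psi ` (WCQSym :: 'a::comm_ring_1 ser set) = ShaPlus"
proof (intro set_eqI iffI)
  fix f :: "'a sh" assume "f \<in> psi ` WCQSym"
  then show "f \<in> ShaPlus" using psi_ShaPlus by (auto simp: WCQSym_eq wc_def)
next
  fix f :: "'a sh" assume f: "f \<in> ShaPlus"
  define h where "h = (\<lambda>\<gamma>. f (theta \<gamma>))"
  have "{\<gamma>. is_ncomp \<gamma> \<and> h \<gamma> \<noteq> 0} \<subseteq> {\<gamma>. is_ncomp \<gamma> \<and> theta \<gamma> \<in> wsupp f}"
    by (auto simp: h_def wsupp_def)
  moreover have "finite {\<gamma>. is_ncomp \<gamma> \<and> theta \<gamma> \<in> wsupp f}"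
    using f by (intro finite_thinv_pre) (auto simp: ShaPlus_def)
  ultimately have w: "wc (lift h)" using finite_subset wc_lift by blast
  have "psi (lift h) = f"
  proof
    fix w
    show "psi (lift h) w = f w"
      unfolding psi_eval[OF wc_fin[OF w]] by (simp add: lift_coeff h_def)
  qed
  then show "f \<in> psi ` WCQSym" using w by (auto simp: WCQSym_eq)
qed



lemma cnt_map_Cons: "count_list (map ((#) x) L) (c # w) = (if x = c then count_list L w else 0)"
  by (induction L) auto

lemma cnt_map_Cons_Nil: "count_list (map ((#) x) L) [] = 0"
  by (induction L) auto

lemma msh_nonempty: "w \<in> set (msh u v) \<Longrightarrow> w = [] \<Longrightarrow> u = [] \<and> v = []"
  by (induction u v rule: msh.induct) auto

lemma msh_Nil2[simp]: "msh xs [] = [xs]"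
  by (cases xs) auto

lemma cnt_msh_Nil: "count_list (msh u v) [] = (if u = [] \<and> v = [] then 1 else 0)"
proof (cases "u = [] \<and> v = []")
  case True then show ?thesis by simp
next
  case False
  then have "[] \<notin> set (msh u v)" using msh_nonempty by blast
  then show ?thesis using False by simp
qed

lemma cnt_msh_Cons:
  "count_list (msh u v) (c # w) =
     (case u of [] \<Rightarrow> 0 | x # xs \<Rightarrow> if x = c then count_list (msh xs v) w else 0)
   + (case v of [] \<Rightarrow> 0 | y # ys \<Rightarrow> if y = c then count_list (msh u ys) w else 0)
   + (case u of [] \<Rightarrow> 0 | x # xs \<Rightarrow> (case v of [] \<Rightarrow> 0 | y # ys \<Rightarrow>
        if x + y = c then count_list (msh xs ys) w else 0))"
proof (cases u)
  case Nil
  then show ?thesis by (cases v) auto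
next
  case (Cons x xs)
  then show ?thesis by (cases v) (auto simp: cnt_map_Cons)
qed

definition addl :: "ntilde list \<Rightarrow> ntilde list \<Rightarrow> ntilde list" where
  "addl x y = map (\<lambda>(a, b). addN a b) (zip x y)"

definition LP :: "ntilde list \<Rightarrow> (ntilde list \<times> ntilde list) set" where
  "LP l = {(x, y). length x = length l \<and> length y = length l \<and> addl x y = l}"

definition CP :: "ntilde \<Rightarrow> (ntilde \<times> ntilde) set" where
  "CP l = {(a, b). addN a b = l}"

lemma LP_Nil: "LP [] = {([], [])}"
  by (auto simp: LP_def addl_def)

lemma LP_Cons: "LP (l # ls) = (\<lambda>(q, p). (fst q # fst p, snd q # snd p)) ` (CP l \<times> LP ls)"
proof (intro set_eqI iffI)
  fix z assume "z \<in> LP (l # ls)"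
  then obtain x' y' where z0: "z = (x', y')" and h: "length x' = Suc (length ls)"
    "length y' = Suc (length ls)" "addl x' y' = l # ls"
    by (cases z) (simp add: LP_def)
  then obtain a x b y where xy: "x' = a # x" "y' = b # y" by (metis length_Suc_conv)
  have z: "z = (a # x, b # y)" "length x = length ls" "length y = length ls"
    "addN a b = l" "addl x y = ls"
    using z0 h xy by (auto simp: addl_def)
  show "z \<in> (\<lambda>(q, p). (fst q # fst p, snd q # snd p)) ` (CP l \<times> LP ls)"
  proof (rule image_eqI[of _ _ "((a, b), (x, y))"])
    show "z = (case ((a, b), x, y) of (q, p) \<Rightarrow> (fst q # fst p, snd q # snd p))" using z by simp
    show "((a, b), x, y) \<in> CP l \<times> LP ls" using z by (simp add: CP_def LP_def)
  qed
next
  fix z assume "z \<in> (\<lambda>(q, p). (fst q # fst p, snd q # snd p)) ` (CP l \<times> LP ls)"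
  then obtain q p where qp: "q \<in> CP l" "p \<in> LP ls" "z = (fst q # fst p, snd q # snd p)"
    by auto
  obtain a b x y where "q = (a, b)" "p = (x, y)" by (cases q, cases p)
  then show "z \<in> LP (l # ls)" using qp by (simp add: CP_def LP_def addl_def)
qed

lemma LP_inj: "inj_on (\<lambda>(q, p). (fst q # fst p, snd q # snd p)) A"
  by (auto simp: inj_on_def)

fun sz :: "ntilde \<Rightarrow> nat" where
  "sz Eps = 0" | "sz (Nat n) = n"

lemma addN_bound: "addN a b = l \<Longrightarrow> a \<in> insert Eps (Nat ` {..sz l}) \<and> b \<in> insert Eps (Nat ` {..sz l})"
  by (cases a; cases b) (auto split: if_splits)

lemma finite_CP: "finite (CP l)"
proof -
  have "CP l \<subseteq> insert Eps (Nat ` {..sz l}) \<times> insert Eps (Nat ` {..sz l})"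
    using addN_bound by (auto simp: CP_def)
  then show ?thesis using finite_subset by blast
qed

lemma finite_LP: "finite (LP ls)"
  by (induction ls) (auto simp: LP_Nil LP_Cons finite_CP)

lemma sum_LP_Cons:
  "(\<Sum>p\<in>LP (l # ls). f p) = (\<Sum>q\<in>CP l. \<Sum>p\<in>LP ls. f (fst q # fst p, snd q # snd p))"
  unfolding LP_Cons
  by (subst sum.reindex[OF LP_inj]) (simp add: sum.cartesian_product case_prod_beta)

lemma CP_Nat0: "CP (Nat 0) = {(Nat 0, Nat 0)}"
  by (auto simp: CP_def elim!: addN.elims split: if_splits)

lemma addN_0_left[simp]: "addN (Nat 0) b = b"
  by (cases b) auto

lemma addN_0_right[simp]: "addN a (Nat 0) = a"
  by (cases a) auto

lemma addN_nz: "a \<noteq> Nat 0 \<Longrightarrow> b \<noteq> Nat 0 \<Longrightarrow> addN a b \<noteq> Nat 0"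
  by (cases a; cases b) auto

lemma th_addN: "a \<noteq> Nat 0 \<Longrightarrow> b \<noteq> Nat 0 \<Longrightarrow> th (addN a b) = th a + th b"
  by (cases a; cases b) (auto simp: th_def)

lemma pat_Cons: "pat (a # x) = \<alpha> \<longleftrightarrow>
   (if a = Nat 0 then pat x = \<alpha> else (\<alpha> \<noteq> [] \<and> hd \<alpha> = a \<and> pat x = tl \<alpha>))"
  by (cases \<alpha>) (auto simp: pat_def)

definition R :: "ntilde list \<Rightarrow> ntilde list \<Rightarrow> ntilde list \<Rightarrow> 'a::comm_ring_1" where
  "R ls \<alpha> \<beta> = (\<Sum>p\<in>LP ls. if pat (fst p) = \<alpha> \<and> pat (snd p) = \<beta> then 1 else 0)"

lemma R_step:
  "(\<Sum>p\<in>LP ls. if pat (a # fst p) = \<alpha> \<and> pat (b # snd p) = \<beta> then 1 else 0)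
   = (if a = Nat 0 then (if b = Nat 0 then R ls \<alpha> \<beta>
                         else if \<beta> \<noteq> [] \<and> hd \<beta> = b then R ls \<alpha> (tl \<beta>) else 0)
      else if \<alpha> \<noteq> [] \<and> hd \<alpha> = a then
         (if b = Nat 0 then R ls (tl \<alpha>) \<beta>
          else if \<beta> \<noteq> [] \<and> hd \<beta> = b then R ls (tl \<alpha>) (tl \<beta>) else 0)
      else 0)"
  unfolding R_def pat_Cons by (auto intro: sum.neutral)

lemma ncomp_tl: "is_ncomp \<alpha> \<Longrightarrow> is_ncomp (tl \<alpha>)"
  by (cases \<alpha>) (auto simp: is_ncomp_def)

lemma ncomp_hd: "is_ncomp \<alpha> \<Longrightarrow> \<alpha> \<noteq> [] \<Longrightarrow> hd \<alpha> \<noteq> Nat 0"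
  by (cases \<alpha>) (auto simp: is_ncomp_def)

lemma theta_pat_Cons: "theta (pat (l # ls)) = (if l = Nat 0 then theta (pat ls) else th l # theta (pat ls))"
  by (simp add: pat_def theta_th)

lemma R_msh:
  assumes "is_ncomp \<alpha>" "is_ncomp \<beta>"
  shows "R ls \<alpha> \<beta> = (of_nat (count_list (msh (theta \<alpha>) (theta \<beta>)) (theta (pat ls))) :: 'a::comm_ring_1)"
  using assms
proof (induction ls arbitrary: \<alpha> \<beta>)
  case Nil
  then show ?case
    by (simp add: R_def LP_Nil cnt_msh_Nil pat_def theta_th)
next
  case (Cons l ls)
  note IH = Cons.IH
  show ?case
  proof (cases "l = Nat 0")
    case True
    have "R (l # ls) \<alpha> \<beta> = (R ls \<alpha> \<beta> :: 'a)"
      unfolding R_def sum_LP_Cons True CP_Nat0 using R_step[where a="Nat 0" and b="Nat 0" and ls=ls and \<alpha>=\<alpha> and \<beta>=\<beta>]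
      by (simp add: R_def)
    then show ?thesis using IH[OF Cons.prems] True by (simp add: theta_pat_Cons)
  next
    case False
    define G where "G = (\<lambda>q. (\<Sum>p\<in>LP ls. if pat (fst q # fst p) = \<alpha> \<and> pat (snd q # snd p) = \<beta> then 1 else 0) :: 'a)"
    define G1 where "G1 = (\<lambda>q. if q = (l, Nat 0) then (if \<alpha> \<noteq> [] \<and> hd \<alpha> = l then R ls (tl \<alpha>) \<beta> else 0) else (0::'a))"
    define G2 where "G2 = (\<lambda>q. if q = (Nat 0, l) then (if \<beta> \<noteq> [] \<and> hd \<beta> = l then R ls \<alpha> (tl \<beta>) else 0) else (0::'a))"
    define G3 where "G3 = (\<lambda>q. if \<alpha> \<noteq> [] \<and> \<beta> \<noteq> [] \<and> q = (hd \<alpha>, hd \<beta>) then R ls (tl \<alpha>) (tl \<beta>) else (0::'a))"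
    have hz: "\<alpha> \<noteq> [] \<Longrightarrow> hd \<alpha> \<noteq> Nat 0" "\<beta> \<noteq> [] \<Longrightarrow> hd \<beta> \<noteq> Nat 0"
      using ncomp_hd Cons.prems by auto
    have split: "G q = G1 q + G2 q + G3 q" if "q \<in> CP l" for q
    proof -
      obtain a b where q1: "q = (a, b)" by (cases q)
      have q: "q = (a, b)" "addN a b = l" using that q1 by (auto simp: CP_def)
      show ?thesis
        unfolding G_def G1_def G2_def G3_def q(1) fst_conv snd_conv R_step
        using q(2) False hz hz[THEN not_sym]
        by (cases "a = Nat 0"; cases "b = Nat 0"; cases "\<alpha> = []"; cases "\<beta> = []") simp_all
    qed
    have "R (l # ls) \<alpha> \<beta> = (\<Sum>q\<in>CP l. G q)"
      unfolding R_def sum_LP_Cons G_def by simp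
    also have "\<dots> = (\<Sum>q\<in>CP l. G1 q) + (\<Sum>q\<in>CP l. G2 q) + (\<Sum>q\<in>CP l. G3 q)"
      using split by (simp add: sum.distrib)
    also have "(\<Sum>q\<in>CP l. G1 q) = (if \<alpha> \<noteq> [] \<and> hd \<alpha> = l then R ls (tl \<alpha>) \<beta> else 0)"
      unfolding G1_def using finite_CP[of l] by (simp add: sum.delta' CP_def)
    also have "(\<Sum>q\<in>CP l. G2 q) = (if \<beta> \<noteq> [] \<and> hd \<beta> = l then R ls \<alpha> (tl \<beta>) else 0)"
      unfolding G2_def using finite_CP[of l] by (simp add: sum.delta' CP_def)
    also have "(\<Sum>q\<in>CP l. G3 q) = (if \<alpha> \<noteq> [] \<and> \<beta> \<noteq> [] \<and> addN (hd \<alpha>) (hd \<beta>) = l then R ls (tl \<alpha>) (tl \<beta>) else 0)"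
    proof (cases "\<alpha> \<noteq> [] \<and> \<beta> \<noteq> []")
      case True
      then show ?thesis unfolding G3_def using finite_CP[of l] by (simp add: sum.delta' CP_def)
    qed (auto simp: G3_def)
    finally have eq: "R (l # ls) \<alpha> \<beta> =
        (if \<alpha> \<noteq> [] \<and> hd \<alpha> = l then R ls (tl \<alpha>) \<beta> else 0)
      + (if \<beta> \<noteq> [] \<and> hd \<beta> = l then R ls \<alpha> (tl \<beta>) else 0)
      + (if \<alpha> \<noteq> [] \<and> \<beta> \<noteq> [] \<and> addN (hd \<alpha>) (hd \<beta>) = l then R ls (tl \<alpha>) (tl \<beta>) else (0::'a))" .
    have ta: "\<alpha> \<noteq> [] \<Longrightarrow> theta \<alpha> = th (hd \<alpha>) # theta (tl \<alpha>)" by (cases \<alpha>) (auto simp: theta_th)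
    have tb: "\<beta> \<noteq> [] \<Longrightarrow> theta \<beta> = th (hd \<beta>) # theta (tl \<beta>)" by (cases \<beta>) (auto simp: theta_th)
    have e1: "\<alpha> \<noteq> [] \<Longrightarrow> th (hd \<alpha>) = th l \<longleftrightarrow> hd \<alpha> = l" using hz False th_inj by blast
    have e2: "\<beta> \<noteq> [] \<Longrightarrow> th (hd \<beta>) = th l \<longleftrightarrow> hd \<beta> = l" using hz False th_inj by blast
    have e3: "\<alpha> \<noteq> [] \<Longrightarrow> \<beta> \<noteq> [] \<Longrightarrow> th (hd \<alpha>) + th (hd \<beta>) = th l \<longleftrightarrow> addN (hd \<alpha>) (hd \<beta>) = l"
      using hz False th_inj[of "addN (hd \<alpha>) (hd \<beta>)" l] th_addN addN_nz by metis
    have ih1: "R ls (tl \<alpha>) \<beta> = (of_nat (count_list (msh (theta (tl \<alpha>)) (theta \<beta>)) (theta (pat ls))) :: 'a)"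
      using IH ncomp_tl Cons.prems by blast
    have ih2: "R ls \<alpha> (tl \<beta>) = (of_nat (count_list (msh (theta \<alpha>) (theta (tl \<beta>))) (theta (pat ls))) :: 'a)"
      using IH ncomp_tl Cons.prems by blast
    have ih3: "R ls (tl \<alpha>) (tl \<beta>) = (of_nat (count_list (msh (theta (tl \<alpha>)) (theta (tl \<beta>))) (theta (pat ls))) :: 'a)"
      using IH ncomp_tl Cons.prems by blast
    have cm: "count_list (msh (theta \<alpha>) (theta \<beta>)) (th l # t) =
       (if \<alpha> \<noteq> [] \<and> hd \<alpha> = l then count_list (msh (theta (tl \<alpha>)) (theta \<beta>)) t else 0)
     + (if \<beta> \<noteq> [] \<and> hd \<beta> = l then count_list (msh (theta \<alpha>) (theta (tl \<beta>))) t else 0)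
     + (if \<alpha> \<noteq> [] \<and> \<beta> \<noteq> [] \<and> addN (hd \<alpha>) (hd \<beta>) = l then count_list (msh (theta (tl \<alpha>)) (theta (tl \<beta>))) t else 0)" for t
    proof (cases "\<alpha> = []")
      case True
      show ?thesis
      proof (cases "\<beta> = []")
        case bn: False
        show ?thesis using True bn
          apply (subst (1 2) tb[OF bn])
          apply (simp add: cnt_msh_Cons e2[OF bn] theta_def)
          done
      qed (simp add: True cnt_msh_Cons theta_def)
    next
      case an: False
      show ?thesis
      proof (cases "\<beta> = []")
        case True
        then show ?thesis using an
          apply (subst (1 2) ta[OF an])
          apply (simp add: cnt_msh_Cons e1[OF an] theta_def)
          done
      next
        case False
        then show ?thesis using an
          apply (subst (1 2) ta[OF an])
          apply (subst (1 2) tb[OF False])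
          apply (simp only: cnt_msh_Cons list.case e1[OF an] e2[OF False] e3[OF an False])
          apply (simp add: ta[symmetric] tb[symmetric] an False)
          done
      qed
    qed
    show ?thesis
      unfolding eq theta_pat_Cons if_not_P[OF False] cm ih1 ih2 ih3
      by simp
  qed
qed



definition Pairs :: "expo \<Rightarrow> (expo \<times> expo) set" where
  "Pairs m = {(a, b). addf a b = m}"

lemma ser_mult_Pairs: "ser_mult F G m = (\<Sum>p\<in>Pairs m. F (fst p) * G (snd p))"
  by (simp add: ser_mult_def Pairs_def)

lemma addN_eq0: "addN a b = Nat 0 \<longleftrightarrow> a = Nat 0 \<and> b = Nat 0"
  by (cases a; cases b) auto

lemma addl_map: "addl (map a xs) (map b xs) = map (\<lambda>i. addN (a i) (b i)) xs"
  by (induction xs) (auto simp: addl_def)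

lemma nth_addl: "i < length x \<Longrightarrow> length y = length x \<Longrightarrow> addl x y ! i = addN (x ! i) (y ! i)"
  by (simp add: addl_def)

lemma length_addl: "length (addl x y) = min (length x) (length y)"
  by (simp add: addl_def)

lemma tofun_map: "(\<forall>i\<ge>n. a i = Nat 0) \<Longrightarrow> tofun (map a [0..<n]) = a"
  by (auto simp: tofun_def)

lemma Pairs_LP:
  assumes "esupp m \<subseteq> {..<n}"
  shows "Pairs m = (\<lambda>(x, y). (tofun x, tofun y)) ` LP (map m [0..<n])"
proof (intro set_eqI iffI)
  fix p assume "p \<in> Pairs m"
  then obtain a b where p: "p = (a, b)" "addf a b = m" by (auto simp: Pairs_def)
  have z: "\<forall>i\<ge>n. a i = Nat 0 \<and> b i = Nat 0"
  proof (intro allI impI)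
    fix i assume "n \<le> i"
    then have "m i = Nat 0" using assms by (auto simp: esupp_def)
    then show "a i = Nat 0 \<and> b i = Nat 0" using p(2) by (auto simp: addf_def addN_eq0 dest: fun_cong[of _ _ i])
  qed
  have "(map a [0..<n], map b [0..<n]) \<in> LP (map m [0..<n])"
    using p(2) by (auto simp: LP_def addl_map addf_def)
  moreover have "p = (tofun (map a [0..<n]), tofun (map b [0..<n]))"
    using p z by (simp add: tofun_map)
  ultimately show "p \<in> (\<lambda>(x, y). (tofun x, tofun y)) ` LP (map m [0..<n])"
    by (auto intro!: image_eqI)
next
  fix p assume "p \<in> (\<lambda>(x, y). (tofun x, tofun y)) ` LP (map m [0..<n])"
  then obtain x y where p: "p = (tofun x, tofun y)" "length x = n" "length y = n" "addl x y = map m [0..<n]"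
    by (auto simp: LP_def)
  have "addf (tofun x) (tofun y) = m"
  proof
    fix i show "addf (tofun x) (tofun y) i = m i"
    proof (cases "i < n")
      case True
      then have "addl x y ! i = m i" using p(4) by simp
      then show ?thesis using True p(2,3) by (simp add: addf_def tofun_def nth_addl)
    next
      case False
      then have "m i = Nat 0" using assms by (auto simp: esupp_def)
      then show ?thesis using False p(2,3) by (simp add: addf_def tofun_def)
    qed
  qed
  then show "p \<in> Pairs m" using p by (simp add: Pairs_def)
qed

lemma tofun_inj: "length x = length y \<Longrightarrow> tofun x = tofun y \<Longrightarrow> x = y"
proof (rule nth_equalityI)
  fix i assume "length x = length y" "tofun x = tofun y" "i < length x"
  then have "tofun x i = tofun y i" by simp
  then show "x ! i = y ! i" using \<open>i < length x\<close> \<open>length x = length y\<close> by (simp add: tofun_def)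
qed

lemma LP_tofun_inj: "inj_on (\<lambda>(x, y). (tofun x, tofun y)) (LP l)"
  by (auto simp: inj_on_def LP_def intro: tofun_inj)

lemma esupp_tofun: "esupp (tofun x) \<subseteq> {..<length x}"
  by (auto simp: esupp_def tofun_def split: if_splits)

lemma patm_tofun: "patm (tofun x) = pat x"
proof -
  have "map (tofun x) [0..<length x] = x" by (rule nth_equalityI) (auto simp: tofun_def)
  then show ?thesis using patm_list[OF esupp_tofun[of x]] by simp
qed

lemma M_tofun: "M \<alpha> (tofun x) = (if pat x = \<alpha> then 1 else 0)"
  by (simp add: M_alt patm_tofun finite_subset[OF esupp_tofun])

lemma Pairs_M:
  assumes "finite (esupp m)" "is_ncomp \<alpha>" "is_ncomp \<beta>"
  shows "(\<Sum>p\<in>Pairs m. M \<alpha> (fst p) * M \<beta> (snd p)) =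
     (of_nat (count_list (msh (theta \<alpha>) (theta \<beta>)) (theta (patm m))) :: 'a::comm_ring_1)"
proof -
  define n where "n = Suc (Max (esupp m))"
  have n: "esupp m \<subseteq> {..<n}" using assms(1) by (auto simp: n_def less_Suc_eq_le intro: Max_ge)
  have "(\<Sum>p\<in>Pairs m. M \<alpha> (fst p) * M \<beta> (snd p)) =
     (\<Sum>p\<in>LP (map m [0..<n]). (M \<alpha> (tofun (fst p)) * M \<beta> (tofun (snd p)) :: 'a))"
    unfolding Pairs_LP[OF n] by (subst sum.reindex[OF LP_tofun_inj]) (simp add: case_prod_beta)
  also have "\<dots> = R (map m [0..<n]) \<alpha> \<beta>"
    unfolding R_def M_tofun by (intro sum.cong) auto
  also have "\<dots> = of_nat (count_list (msh (theta \<alpha>) (theta \<beta>)) (theta (patm m)))"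
    using R_msh[OF assms(2,3)] patm_list[OF n] by simp
  finally show ?thesis .
qed

lemma infinite_Pairs:
  assumes "infinite (esupp m)"
  shows "infinite (Pairs m)"
proof
  assume fin: "finite (Pairs m)"
  define h where "h = (\<lambda>i. (m(i := Nat 0), (\<lambda>j. if j = i then m i else Nat 0)))"
  have "h ` esupp m \<subseteq> Pairs m"
  proof
    fix p assume "p \<in> h ` esupp m"
    then obtain i where "p = h i" by auto
    moreover have "addf (m(i := Nat 0)) (\<lambda>j. if j = i then m i else Nat 0) = m"
      by (auto simp: addf_def)
    ultimately show "p \<in> Pairs m" by (simp add: h_def Pairs_def)
  qed
  moreover have "inj_on h (esupp m)"
  proof (rule inj_onI)
    fix i j assume "i \<in> esupp m" "j \<in> esupp m" "h i = h j"
    then have "snd (h i) i = snd (h j) i" by simp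
    then have "(if i = i then m i else Nat 0) = (if i = j then m j else Nat 0)"
      unfolding h_def snd_conv .
    then show "i = j" using \<open>i \<in> esupp m\<close> by (auto simp: esupp_def split: if_splits)
  qed
  ultimately have "finite (esupp m)"
    using fin by (metis finite_imageD finite_subset)
  then show False using assms by simp
qed

definition K :: "'a::comm_ring_1 ser \<Rightarrow> 'a ser \<Rightarrow> ntilde list \<Rightarrow> 'a" where
  "K F G \<gamma> = (\<Sum>\<alpha>\<in>csupp F. \<Sum>\<beta>\<in>csupp G. coeffM F \<alpha> * coeffM G \<beta> *
       of_nat (count_list (msh (theta \<alpha>) (theta \<beta>)) (theta \<gamma>)))"

lemma ser_mult_lift:
  fixes F G :: "'a::comm_ring_1 ser"
  assumes "wc F" "wc G"
  shows "ser_mult F G = lift (K F G)"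
proof
  fix m
  show "ser_mult F G m = lift (K F G) m"
  proof (cases "finite (esupp m)")
    case False
    then show ?thesis using infinite_Pairs[OF False] by (simp add: ser_mult_Pairs lift_def)
  next
    case True
    have nc: "\<And>\<alpha>. \<alpha> \<in> csupp F \<Longrightarrow> is_ncomp \<alpha>" "\<And>\<alpha>. \<alpha> \<in> csupp G \<Longrightarrow> is_ncomp \<alpha>"
      by (auto simp: csupp_def)
    have "ser_mult F G m = (\<Sum>p\<in>Pairs m. (\<Sum>\<alpha>\<in>csupp F. coeffM F \<alpha> * M \<alpha> (fst p)) * (\<Sum>\<beta>\<in>csupp G. coeffM G \<beta> * M \<beta> (snd p)))"
      unfolding ser_mult_Pairs
      by (subst (1) wc_repr[OF assms(1)], subst (1) wc_repr[OF assms(2)]) simp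
    also have "\<dots> = (\<Sum>p\<in>Pairs m. \<Sum>\<alpha>\<in>csupp F. \<Sum>\<beta>\<in>csupp G. coeffM F \<alpha> * coeffM G \<beta> * (M \<alpha> (fst p) * M \<beta> (snd p)))"
      by (simp add: sum_product mult_ac)
    also have "\<dots> = (\<Sum>\<alpha>\<in>csupp F. \<Sum>\<beta>\<in>csupp G. \<Sum>p\<in>Pairs m. coeffM F \<alpha> * coeffM G \<beta> * (M \<alpha> (fst p) * M \<beta> (snd p)))"
      by (subst sum.swap, subst (2) sum.swap) simp
    also have "\<dots> = (\<Sum>\<alpha>\<in>csupp F. \<Sum>\<beta>\<in>csupp G. coeffM F \<alpha> * coeffM G \<beta> * (\<Sum>p\<in>Pairs m. M \<alpha> (fst p) * M \<beta> (snd p)))"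
      by (simp add: sum_distrib_left)
    also have "\<dots> = K F G (patm m)"
      unfolding K_def by (intro sum.cong refl) (simp add: Pairs_M[OF True] nc)
    finally show ?thesis using True by (simp add: lift_def)
  qed
qed

lemma K_finite:
  fixes F G :: "'a::comm_ring_1 ser"
  assumes "wc F" "wc G"
  shows "finite {\<gamma>. is_ncomp \<gamma> \<and> K F G \<gamma> \<noteq> 0}"
proof -
  let ?W = "\<Union>\<alpha>\<in>csupp F. \<Union>\<beta>\<in>csupp G. set (msh (theta \<alpha>) (theta \<beta>))"
  have "{\<gamma>. is_ncomp \<gamma> \<and> K F G \<gamma> \<noteq> 0} \<subseteq> {\<gamma>. is_ncomp \<gamma> \<and> theta \<gamma> \<in> ?W}"
  proof
    fix \<gamma> assume "\<gamma> \<in> {\<gamma>. is_ncomp \<gamma> \<and> K F G \<gamma> \<noteq> 0}"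
    then have "is_ncomp \<gamma>" "K F G \<gamma> \<noteq> 0" by auto
    then obtain \<alpha> \<beta> where "\<alpha> \<in> csupp F" "\<beta> \<in> csupp G" "count_list (msh (theta \<alpha>) (theta \<beta>)) (theta \<gamma>) \<noteq> 0"
      unfolding K_def by (metis (no_types, lifting) mult_zero_right of_nat_0 sum.neutral)
    then show "\<gamma> \<in> {\<gamma>. is_ncomp \<gamma> \<and> theta \<gamma> \<in> ?W}"
      using \<open>is_ncomp \<gamma>\<close> count_notin by fastforce
  qed
  moreover have "finite {\<gamma>. is_ncomp \<gamma> \<and> theta \<gamma> \<in> ?W}"
    using assms by (intro finite_thinv_pre) (auto simp: wc_def)
  ultimately show ?thesis using finite_subset by blast
qed

lemma wc_mult:
  fixes F G :: "'a::comm_ring_1 ser"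
  assumes "wc F" "wc G"
  shows "wc (ser_mult F G)"
  unfolding ser_mult_lift[OF assms] by (rule wc_lift[OF K_finite[OF assms]])

lemma coeff_mult:
  fixes F G :: "'a::comm_ring_1 ser"
  assumes "wc F" "wc G" "is_ncomp \<gamma>"
  shows "coeffM (ser_mult F G) \<gamma> = K F G \<gamma>"
  unfolding ser_mult_lift[OF assms(1,2)] using lift_coeff[OF assms(3)] .



lemma theta_inj_on: "inj_on (\<lambda>\<alpha>. 0 # theta \<alpha>) (csupp F)" "inj_on theta (csupp F)"
  by (auto simp: inj_on_def csupp_def theta_inj)

lemma phi_at:
  fixes F :: "'a::comm_ring_1 ser"
  assumes "finite (csupp F)" "\<alpha> \<in> csupp F"
  shows "phi F (0 # theta \<alpha>) = coeffM F \<alpha>"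
  using assms by (simp add: phi_eval csupp_def thinv_theta)

lemma psi_at:
  fixes F :: "'a::comm_ring_1 ser"
  assumes "finite (csupp F)" "\<alpha> \<in> csupp F"
  shows "psi F (theta \<alpha>) = coeffM F \<alpha>"
  using assms by (simp add: psi_eval csupp_def thinv_theta)

lemma cnt_dmd0: "count_list (dmd (0 # u) (0 # v)) w = (case w of [] \<Rightarrow> 0 | x # \<gamma> \<Rightarrow> if x = 0 then count_list (msh u v) \<gamma> else 0)"
  by (cases w) (auto simp: cnt_map_Cons cnt_map_Cons_Nil)

lemma cnt_map0: "count_list (map ((#) 0) L) w = (case w of [] \<Rightarrow> 0 | x # \<gamma> \<Rightarrow> if x = 0 then count_list L \<gamma> else 0)"
  by (cases w) (auto simp: cnt_map_Cons cnt_map_Cons_Nil)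

lemma phi_mult:
  fixes F G :: "'a::comm_ring_1 ser"
  assumes F: "wc F" and G: "wc G"
  shows "phi (ser_mult F G) = diamond (phi F) (phi G)"
proof
  fix w
  have fF: "finite (csupp F)" and fG: "finite (csupp G)" using F G by (auto simp: wc_def)
  have fM: "finite (csupp (ser_mult F G))" using wc_mult[OF F G] by (simp add: wc_def)
  have "diamond (phi F) (phi G) w = (\<Sum>\<alpha>\<in>csupp F. \<Sum>\<beta>\<in>csupp G.
      phi F (0 # theta \<alpha>) * phi G (0 # theta \<beta>) * of_nat (count_list (dmd (0 # theta \<alpha>) (0 # theta \<beta>)) w))"
    unfolding diamond_def wsupp_phi[OF fF] wsupp_phi[OF fG]
    by (simp add: sum.reindex[OF theta_inj_on(1)])
  also have "\<dots> = (\<Sum>\<alpha>\<in>csupp F. \<Sum>\<beta>\<in>csupp G.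
      coeffM F \<alpha> * coeffM G \<beta> * of_nat (case w of [] \<Rightarrow> 0 | x # \<gamma> \<Rightarrow> if x = 0 then count_list (msh (theta \<alpha>) (theta \<beta>)) \<gamma> else 0))"
    by (intro sum.cong refl) (simp add: phi_at fF fG cnt_map0)
  also have "\<dots> = phi (ser_mult F G) w"
  proof (cases w)
    case Nil then show ?thesis by (simp add: phi_eval[OF fM])
  next
    case (Cons x \<gamma>)
    then show ?thesis
      by (cases "x = 0") (simp_all add: coeff_mult[OF F G] K_def phi_eval[OF fM])
  qed
  finally show "phi (ser_mult F G) w = diamond (phi F) (phi G) w" by simp
qed

lemma psi_mult:
  fixes F G :: "'a::comm_ring_1 ser"
  assumes F: "wc F" and G: "wc G"
  shows "psi (ser_mult F G) = star (psi F) (psi G)"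
proof
  fix w
  have fF: "finite (csupp F)" and fG: "finite (csupp G)" using F G by (auto simp: wc_def)
  have fM: "finite (csupp (ser_mult F G))" using wc_mult[OF F G] by (simp add: wc_def)
  have "star (psi F) (psi G) w = (\<Sum>\<alpha>\<in>csupp F. \<Sum>\<beta>\<in>csupp G.
      psi F (theta \<alpha>) * psi G (theta \<beta>) * of_nat (count_list (msh (theta \<alpha>) (theta \<beta>)) w))"
    unfolding star_def wsupp_psi[OF fF] wsupp_psi[OF fG]
    by (simp add: sum.reindex[OF theta_inj_on(2)])
  also have "\<dots> = (\<Sum>\<alpha>\<in>csupp F. \<Sum>\<beta>\<in>csupp G.
      coeffM F \<alpha> * coeffM G \<beta> * of_nat (count_list (msh (theta \<alpha>) (theta \<beta>)) w))"
    by (intro sum.cong refl) (simp add: psi_at fF fG)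
  also have "\<dots> = psi (ser_mult F G) w"
    unfolding psi_eval[OF fM] by (simp add: coeff_mult[OF F G] K_def)
  finally show "psi (ser_mult F G) w = star (psi F) (psi G) w" by simp
qed

lemma ser_one_M: "ser_one = M []"
proof
  fix m :: expo
  have "finite (esupp m) \<and> patm m = [] \<longleftrightarrow> m = (\<lambda>_. Nat 0)"
  proof
    assume a: "finite (esupp m) \<and> patm m = []"
    then have "esupp m = {}" by (auto simp: patm_def)
    then show "m = (\<lambda>_. Nat 0)" by (auto simp: esupp_def)
  next
    assume "m = (\<lambda>_. Nat 0)"
    then have "esupp m = {}" by (auto simp: esupp_def)
    then show "finite (esupp m) \<and> patm m = []" by (simp add: patm_def)
  qed
  then show "ser_one m = M [] m" by (simp add: ser_one_def M_alt)
qed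

lemma ncomp_Nil: "is_ncomp []" by (simp add: is_ncomp_def)
lemma comp_Nil: "is_comp []" by (simp add: is_comp_def)

lemma msh_pos: "(\<forall>x\<in>set u. 0 < x) \<Longrightarrow> (\<forall>y\<in>set v. 0 < y) \<Longrightarrow> w \<in> set (msh u v) \<Longrightarrow> \<forall>z\<in>set w. 0 < z"
proof (induction u v arbitrary: w rule: msh.induct)
  case (3 x xs y ys)
  from 3(6) consider (a) w' where "w = x # w'" "w' \<in> set (msh xs (y # ys))"
    | (b) w' where "w = y # w'" "w' \<in> set (msh (x # xs) ys)"
    | (c) w' where "w = (x + y) # w'" "w' \<in> set (msh xs ys)"
    by (simp only: msh.simps set_append set_map Un_iff) blast
  then show ?case
  proof cases
    case a then show ?thesis using 3(1)[of w'] 3(4,5) by simp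
  next
    case b then show ?thesis using 3(2)[of w'] 3(4,5) by simp
  next
    case c then show ?thesis using 3(3)[of w'] 3(4,5) by simp
  qed
qed auto

lemma comp_theta_pos: "is_comp \<alpha> \<Longrightarrow> \<forall>x\<in>set (theta \<alpha>). 0 < x"
  by (auto simp: is_comp_def theta_th th_def)

lemma pos_theta_comp: "is_ncomp \<gamma> \<Longrightarrow> \<forall>x\<in>set (theta \<gamma>). 0 < x \<Longrightarrow> is_comp \<gamma>"
  unfolding is_comp_def is_ncomp_def theta_th
proof
  fix e assume a: "Nat 0 \<notin> set \<gamma>" "\<forall>x\<in>set (map th \<gamma>). 0 < x" "e \<in> set \<gamma>"
  then have "0 < th e" by auto
  then show "\<exists>n. e = Nat (Suc n)" using a(1,3)
    by (cases e) (auto simp: th_def not0_implies_Suc)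
qed

lemma QSym_mult:
  fixes F G :: "'a::comm_ring_1 ser"
  assumes "F \<in> QSym" "G \<in> QSym"
  shows "ser_mult F G \<in> QSym"
proof -
  have F: "wc F" "csupp F \<subseteq> {\<alpha>. is_comp \<alpha>}" and G: "wc G" "csupp G \<subseteq> {\<alpha>. is_comp \<alpha>}"
    using assms by (auto simp: QSym_eq)
  have "csupp (ser_mult F G) \<subseteq> {\<alpha>. is_comp \<alpha>}"
  proof
    fix \<gamma> assume "\<gamma> \<in> csupp (ser_mult F G)"
    then have nc: "is_ncomp \<gamma>" and "K F G \<gamma> \<noteq> 0"
      by (auto simp: csupp_def coeff_mult[OF F(1) G(1)])
    then obtain \<alpha> \<beta> where ab: "\<alpha> \<in> csupp F" "\<beta> \<in> csupp G" "count_list (msh (theta \<alpha>) (theta \<beta>)) (theta \<gamma>) \<noteq> 0"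
      unfolding K_def by (metis (no_types, lifting) mult_zero_right of_nat_0 sum.neutral)
    have "theta \<gamma> \<in> set (msh (theta \<alpha>) (theta \<beta>))" using ab(3) count_notin by fastforce
    then have "\<forall>x\<in>set (theta \<gamma>). 0 < x"
      using msh_pos comp_theta_pos ab(1,2) F(2) G(2) by blast
    then show "\<gamma> \<in> {\<alpha>. is_comp \<alpha>}" using pos_theta_comp nc by blast
  qed
  then show ?thesis using wc_mult[OF F(1) G(1)] by (simp add: QSym_eq)
qed

lemma QSym_lin:
  fixes F G :: "'a::comm_ring_1 ser"
  assumes "F \<in> QSym" "G \<in> QSym"
  shows "(\<lambda>m. c * F m + G m) \<in> QSym"
  using assms wc_lin[of F G c] by (auto simp: QSym_eq)

lemma QSym_WCQSym: "QSym \<subseteq> WCQSym"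
  by (auto simp: QSym_eq WCQSym_eq)

lemma M_QSym: "is_comp \<alpha> \<Longrightarrow> (M \<alpha> :: 'a::comm_ring_1 ser) \<in> QSym"
proof -
  assume c: "is_comp \<alpha>"
  then have n: "is_ncomp \<alpha>" by (auto simp: is_comp_def is_ncomp_def)
  show ?thesis using wc_M[OF n] csupp_M[OF n] c by (auto simp: QSym_eq)
qed



definition sk :: "nat list \<Rightarrow> nat list" where
  "sk w = filter (\<lambda>n. n \<noteq> 0) w"

definition good :: "nat list \<Rightarrow> bool" where
  "good w \<longleftrightarrow> w = [] \<or> hd w \<noteq> 0"

definition sgn :: "nat list \<Rightarrow> 'a::comm_ring_1" where
  "sgn w = (- 1) ^ count_list w 0"

definition ac :: "nat list list \<Rightarrow> nat list \<Rightarrow> 'a::comm_ring_1" where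
  "ac L s = sum_list (map (\<lambda>w. if sk w = s then sgn w else 0) L)"

definition sc :: "nat list list \<Rightarrow> nat list \<Rightarrow> 'a::comm_ring_1" where
  "sc L s = sum_list (map (\<lambda>w. if good w \<and> sk w = s then sgn w else 0) L)"

lemma sk_Cons: "sk (x # w) = (if x = 0 then sk w else x # sk w)"
  by (simp add: sk_def)

lemma sgn_Cons: "sgn (x # w) = (if x = 0 then - sgn w else (sgn w :: 'a::comm_ring_1))"
  by (simp add: sgn_def)

lemma sgn_Nil[simp]: "sgn [] = 1"
  by (simp add: sgn_def)

lemma sk_Nil[simp]: "sk [] = []"
  by (simp add: sk_def)

lemma ac_append: "ac (L1 @ L2) s = ac L1 s + ac L2 s"
  by (simp add: ac_def)

lemma sc_append: "sc (L1 @ L2) s = sc L1 s + sc L2 s"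
  by (simp add: sc_def)

lemma ac_map_Cons: "(ac (map ((#) x) L) s :: 'a::comm_ring_1) =
   (if x = 0 then - ac L s else (case s of [] \<Rightarrow> 0 | c # t \<Rightarrow> if c = x then ac L t else 0))"
  by (induction L) (auto simp: ac_def sk_Cons sgn_Cons split: list.splits)

lemma sc_map_Cons: "(sc (map ((#) x) L) s :: 'a::comm_ring_1) =
   (if x = 0 then 0 else (case s of [] \<Rightarrow> 0 | c # t \<Rightarrow> if c = x then ac L t else 0))"
  by (induction L) (auto simp: ac_def sc_def good_def sk_Cons sgn_Cons split: list.splits)

lemma ac_single: "ac [w] s = (if sk w = s then sgn w else 0)"
  by (simp add: ac_def)

lemma ac_msh: "(ac (msh u v) s :: 'a::comm_ring_1) = sgn u * sgn v * of_nat (count_list (msh (sk u) (sk v)) s)"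
proof (induction u v arbitrary: s rule: msh.induct)
  case (1 ys)
  then show ?case by (simp add: ac_single)
next
  case (2 v va)
  then show ?case by (simp add: ac_single)
next
  case (3 x xs y ys)
  have e: "(ac (msh (x # xs) (y # ys)) s :: 'a) = ac (map ((#) x) (msh xs (y # ys))) s
      + ac (map ((#) y) (msh (x # xs) ys)) s + ac (map ((#) (x + y)) (msh xs ys)) s"
    by (simp add: ac_append)
  note I1 = 3(1) and I2 = 3(2) and I3 = 3(3)
  show ?case
  proof (cases "x = 0")
    case x0: True
    show ?thesis
    proof (cases "y = 0")
      case y0: True
      show ?thesis unfolding e using x0 y0 I1[of s] I2[of s] I3[of s]
        by (simp add: ac_map_Cons sgn_Cons sk_Cons algebra_simps)
    next
      case y1: False
      show ?thesis
      proof (cases s)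
        case Nil
        then show ?thesis unfolding e using x0 y1 I1[of s]
          by (simp add: ac_map_Cons sgn_Cons sk_Cons algebra_simps)
      next
        case (Cons c t)
        then show ?thesis unfolding e using x0 y1 I1[of s] I2[of t] I3[of t]
          by (simp add: ac_map_Cons sgn_Cons sk_Cons algebra_simps)
      qed
    qed
  next
    case x1: False
    show ?thesis
    proof (cases "y = 0")
      case y0: True
      show ?thesis
      proof (cases s)
        case Nil
        then show ?thesis unfolding e using x1 y0 I2[of s]
          by (simp add: ac_map_Cons sgn_Cons sk_Cons algebra_simps)
      next
        case (Cons c t)
        then show ?thesis unfolding e using x1 y0 I2[of s] I1[of t] I3[of t]
          by (simp add: ac_map_Cons sgn_Cons sk_Cons algebra_simps)
      qed
    next
      case y1: False
      show ?thesis
      proof (cases s)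
        case Nil
        then show ?thesis unfolding e using x1 y1
          by (simp add: ac_map_Cons sgn_Cons sk_Cons cnt_map_Cons_Nil)
      next
        case (Cons c t)
        then show ?thesis unfolding e using x1 y1 I1[of t] I2[of t] I3[of t]
          by (simp add: ac_map_Cons sgn_Cons sk_Cons cnt_map_Cons algebra_simps) (auto simp: algebra_simps)
      qed
    qed
  qed
qed

lemma sc_single: "sc [w] s = (if good w \<and> sk w = s then sgn w else 0)"
  by (simp add: sc_def)

lemma sc_msh: "(sc (msh u v) s :: 'a::comm_ring_1) =
   (if good u \<and> good v then sgn u * sgn v * of_nat (count_list (msh (sk u) (sk v)) s) else 0)"
proof (cases u)
  case Nil
  then show ?thesis by (simp add: sc_single good_def)
next
  case (Cons x xs)
  note u = Cons
  show ?thesis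
  proof (cases v)
    case Nil
    then show ?thesis using u by (simp add: sc_single good_def)
  next
    case (Cons y ys)
    have e: "(sc (msh (x # xs) (y # ys)) s :: 'a) = sc (map ((#) x) (msh xs (y # ys))) s
      + sc (map ((#) y) (msh (x # xs) ys)) s + sc (map ((#) (x + y)) (msh xs ys)) s"
      by (simp add: sc_append)
    show ?thesis
    proof (cases s)
      case Nil
      then show ?thesis unfolding u Cons e
        by (simp add: sc_map_Cons good_def cnt_msh_Nil sk_Cons cnt_map_Cons_Nil)
    next
      case (Cons c t)
      show ?thesis unfolding u \<open>v = y # ys\<close> e Cons
        by (cases "x = 0"; cases "y = 0")
          (simp_all add: sc_append sc_map_Cons ac_msh good_def sgn_Cons sk_Cons cnt_map_Cons algebra_simps, (auto simp: algebra_simps)?)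
    qed
  qed
qed



definition cf :: "nat list \<Rightarrow> 'a::comm_ring_1" where
  "cf w = (if good w then sgn w else 0)"

definition Bk :: "nat list \<Rightarrow> ntilde list" where
  "Bk w = map Nat (sk w)"

definition T :: "nat list \<Rightarrow> 'a::comm_ring_1 ser" where
  "T w = (\<lambda>m. cf w * M (Bk w) m)"

definition gw :: "nat list \<Rightarrow> 'a::comm_ring_1 ser" where
  "gw u = (case u of [] \<Rightarrow> (\<lambda>_. 0) | x # \<gamma> \<Rightarrow> if x = 0 then T \<gamma> else (\<lambda>_. 0))"

definition gmap :: "'a::comm_ring_1 sh \<Rightarrow> 'a ser" where
  "gmap f = (\<lambda>m. \<Sum>w\<in>wsupp f. f w * gw w m)"

lemma comp_Bk: "is_comp (Bk w)"
  by (auto simp: is_comp_def Bk_def sk_def not0_implies_Suc)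

lemma ncomp_Bk: "is_ncomp (Bk w)"
  by (auto simp: is_ncomp_def Bk_def sk_def)

lemma theta_Bk: "theta (Bk w) = sk w"
  by (simp add: Bk_def theta_th th_def comp_def)

lemma pm: "is_ncomp \<pi> \<Longrightarrow> (\<pi> = map Nat s \<longleftrightarrow> Eps \<notin> set \<pi> \<and> s = theta \<pi>)"
proof
  assume "\<pi> = map Nat s"
  then show "Eps \<notin> set \<pi> \<and> s = theta \<pi>" by (auto simp: theta_th th_def comp_def)
next
  assume a: "is_ncomp \<pi>" "Eps \<notin> set \<pi> \<and> s = theta \<pi>"
  have "\<pi> = map Nat (theta \<pi>)"
  proof (rule nth_equalityI)
    fix i assume "i < length \<pi>"
    then have "\<pi> ! i \<in> set \<pi>" by simp
    then have "\<pi> ! i \<noteq> Eps" using a by auto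
    then obtain n where n: "\<pi> ! i = Nat n" by (cases "\<pi> ! i") auto
    then show "\<pi> ! i = map Nat (theta \<pi>) ! i" using \<open>i < length \<pi>\<close>
      by (simp add: theta_th th_def)
  qed (simp add: theta_th)
  then show "\<pi> = map Nat s" using a by simp
qed

lemma M_Bk: "M (Bk w) m = (if finite (esupp m) \<and> Eps \<notin> set (patm m) \<and> sk w = theta (patm m) then 1 else 0)"
  using pm[OF ncomp_patm[of m], of "sk w"] by (auto simp: M_alt Bk_def)

lemma sumT_eval: "sum_list (map (\<lambda>w. T w m) L) =
  (if finite (esupp m) \<and> Eps \<notin> set (patm m) then sc L (theta (patm m)) else (0::'a::comm_ring_1))"
  by (induction L) (auto simp: sc_def T_def M_Bk cf_def)

lemma ser_mult_scale: "ser_mult (\<lambda>m. c * F m) (\<lambda>m. d * G m) m = c * d * ser_mult F G m"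
  by (simp add: ser_mult_def sum_distrib_left mult_ac)

lemma ser_mult_MM:
  assumes "is_ncomp \<alpha>" "is_ncomp \<beta>"
  shows "(ser_mult (M \<alpha>) (M \<beta>) m :: 'a::comm_ring_1) = (if finite (esupp m) then
     of_nat (count_list (msh (theta \<alpha>) (theta \<beta>)) (theta (patm m))) else 0)"
proof (cases "finite (esupp m)")
  case True
  then show ?thesis unfolding ser_mult_Pairs using Pairs_M[OF True assms] by simp
next
  case False
  then show ?thesis unfolding ser_mult_Pairs using infinite_Pairs[OF False] by simp
qed

lemma sk_pos: "\<forall>x\<in>set (sk w). 0 < x"
  by (auto simp: sk_def)

lemma msh_T: "sum_list (map (\<lambda>w. T w m) (msh u v)) = (ser_mult (T u) (T v) m :: 'a::comm_ring_1)"
proof -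
  have r: "ser_mult (T u) (T v) m = cf u * cf v * (if finite (esupp m) then
     of_nat (count_list (msh (sk u) (sk v)) (theta (patm m))) else (0::'a))"
    unfolding T_def ser_mult_scale ser_mult_MM[OF ncomp_Bk ncomp_Bk] theta_Bk ..
  show ?thesis
  proof (cases "finite (esupp m) \<and> Eps \<notin> set (patm m)")
    case True
    then show ?thesis unfolding r sumT_eval sc_msh by (simp add: cf_def)
  next
    case False
    have "count_list (msh (sk u) (sk v)) (theta (patm m)) = 0" if "Eps \<in> set (patm m)"
    proof -
      have "0 \<in> set (theta (patm m))" using that by (force simp: theta_th th_def)
      then have "theta (patm m) \<notin> set (msh (sk u) (sk v))"
        using msh_pos[OF sk_pos sk_pos] by blast
      then show ?thesis by simp
    qed
    then show ?thesis using False unfolding r sumT_eval by auto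
  qed
qed

lemma gmap_super:
  fixes f :: "'a::comm_ring_1 sh"
  assumes "finite S" "wsupp f \<subseteq> S"
  shows "gmap f m = (\<Sum>w\<in>S. f w * gw w m)"
  unfolding gmap_def
  by (rule sum.mono_neutral_left[OF assms(1,2)]) (auto simp: wsupp_def)

lemma gmap_lin:
  fixes f h :: "'a::comm_ring_1 sh"
  assumes "finite (wsupp f)" "finite (wsupp h)"
  shows "gmap (\<lambda>w. c * f w + h w) = (\<lambda>m. c * gmap f m + gmap h m)"
proof
  fix m
  let ?S = "wsupp f \<union> wsupp h"
  have fs: "finite ?S" using assms by simp
  have "wsupp (\<lambda>w. c * f w + h w) \<subseteq> ?S" by (auto simp: wsupp_def)
  then have e1: "gmap (\<lambda>w. c * f w + h w) m = (\<Sum>w\<in>?S. (c * f w + h w) * gw w m)"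
    by (rule gmap_super[OF fs])
  have e2: "gmap f m = (\<Sum>w\<in>?S. f w * gw w m)" by (rule gmap_super[OF fs]) auto
  have e3: "gmap h m = (\<Sum>w\<in>?S. h w * gw w m)" by (rule gmap_super[OF fs]) auto
  show "gmap (\<lambda>w. c * f w + h w) m = c * gmap f m + gmap h m"
    unfolding e1 e2 e3 by (simp add: sum.distrib sum_distrib_left algebra_simps)
qed

lemma wsupp_basis: "(0::'a::comm_ring_1) \<noteq> 1 \<Longrightarrow> wsupp (basis_el u :: 'a sh) = {u}"
  by (auto simp: wsupp_def basis_el_def)

lemma gmap_basis:
  assumes "(0::'a::comm_ring_1) \<noteq> 1"
  shows "gmap (basis_el u :: 'a sh) = gw u"
  unfolding gmap_def wsupp_basis[OF assms] by (simp add: basis_el_def)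



lemma sum_count:
  fixes g :: "'b \<Rightarrow> 'a::comm_ring_1"
  assumes "finite S" "set L \<subseteq> S"
  shows "(\<Sum>w\<in>S. of_nat (count_list L w) * g w) = sum_list (map g L)"
  using assms(2)
proof (induction L)
  case Nil then show ?case by simp
next
  case (Cons x L)
  have "(\<Sum>w\<in>S. of_nat (count_list (x # L) w) * g w) =
        (\<Sum>w\<in>S. of_nat (count_list L w) * g w) + (\<Sum>w\<in>S. if x = w then g w else 0)"
    by (simp add: sum.distrib[symmetric] algebra_simps) (intro sum.cong refl; simp add: algebra_simps)
  also have "(\<Sum>w\<in>S. if x = w then g w else 0) = g x" using Cons.prems assms(1) by (simp add: sum.delta)
  finally show ?case using Cons by simp
qed

lemma gw_0: "gw (0 # w) = T w"
  by (simp add: gw_def)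

lemma ser_mult_sums:
  fixes a :: "'b \<Rightarrow> 'a::comm_ring_1" and b :: "'c \<Rightarrow> 'a"
  shows "ser_mult (\<lambda>m. \<Sum>u\<in>U. a u * X u m) (\<lambda>m. \<Sum>v\<in>V. b v * Y v m) m =
    (\<Sum>u\<in>U. \<Sum>v\<in>V. a u * b v * ser_mult (X u) (Y v) m)"
proof -
  have "ser_mult (\<lambda>m. \<Sum>u\<in>U. a u * X u m) (\<lambda>m. \<Sum>v\<in>V. b v * Y v m) m =
     (\<Sum>p\<in>Pairs m. \<Sum>u\<in>U. \<Sum>v\<in>V. a u * b v * (X u (fst p) * Y v (snd p)))"
    unfolding ser_mult_Pairs by (simp add: sum_product mult_ac)
  also have "\<dots> = (\<Sum>u\<in>U. \<Sum>v\<in>V. \<Sum>p\<in>Pairs m. a u * b v * (X u (fst p) * Y v (snd p)))"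
    by (subst sum.swap, subst (2) sum.swap) simp
  also have "\<dots> = (\<Sum>u\<in>U. \<Sum>v\<in>V. a u * b v * ser_mult (X u) (Y v) m)"
    by (simp add: sum_distrib_left ser_mult_Pairs)
  finally show ?thesis .
qed

lemma gmap_diamond:
  fixes f h :: "'a::comm_ring_1 sh"
  assumes f: "f \<in> OneSha" and h: "h \<in> OneSha"
  shows "gmap (diamond f h) = ser_mult (gmap f) (gmap h)"
proof
  fix m
  have ff: "finite (wsupp f)" and fh: "finite (wsupp h)" using f h by (auto simp: OneSha_def)
  define S where "S = (\<Union>u\<in>wsupp f. \<Union>v\<in>wsupp h. set (dmd u v))"
  have fS: "finite S" using ff fh by (simp add: S_def)
  have sub: "wsupp (diamond f h) \<subseteq> S"
  proof
    fix w assume "w \<in> wsupp (diamond f h)"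
    then have "diamond f h w \<noteq> 0" by (simp add: wsupp_def)
    then obtain u v where "u \<in> wsupp f" "v \<in> wsupp h" "count_list (dmd u v) w \<noteq> 0"
      unfolding diamond_def by (metis (no_types, lifting) mult_zero_right of_nat_0 sum.neutral)
    then show "w \<in> S" unfolding S_def using count_notin by fastforce
  qed
  have du: "\<And>u. u \<in> wsupp f \<Longrightarrow> \<exists>\<gamma>. u = 0 # \<gamma>" using f by (auto simp: OneSha_def wsupp_def)
  have dv: "\<And>v. v \<in> wsupp h \<Longrightarrow> \<exists>\<gamma>. v = 0 # \<gamma>" using h by (auto simp: OneSha_def wsupp_def)
  have "gmap (diamond f h) m = (\<Sum>w\<in>S. (\<Sum>u\<in>wsupp f. \<Sum>v\<in>wsupp h. f u * h v * of_nat (count_list (dmd u v) w)) * gw w m)"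
    by (subst gmap_super[OF fS sub]) (simp add: diamond_def)
  also have "\<dots> = (\<Sum>u\<in>wsupp f. \<Sum>v\<in>wsupp h. f u * h v * (\<Sum>w\<in>S. of_nat (count_list (dmd u v) w) * gw w m))"
    by (simp add: sum_distrib_right sum_distrib_left mult_ac sum.swap[of _ S])
  also have "\<dots> = (\<Sum>u\<in>wsupp f. \<Sum>v\<in>wsupp h. f u * h v * ser_mult (gw u) (gw v) m)"
  proof (intro sum.cong refl)
    fix u v assume uv: "u \<in> wsupp f" "v \<in> wsupp h"
    obtain \<gamma> \<delta> where g: "u = 0 # \<gamma>" "v = 0 # \<delta>" using du[OF uv(1)] dv[OF uv(2)] by blast
    have "set (dmd u v) \<subseteq> S" using uv by (auto simp: S_def)
    then have "(\<Sum>w\<in>S. of_nat (count_list (dmd u v) w) * (gw w m :: 'a)) = sum_list (map (\<lambda>w. gw w m) (dmd u v))"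
      by (rule sum_count[OF fS])
    also have "\<dots> = sum_list (map (\<lambda>w. T w m) (msh \<gamma> \<delta>))"
      by (simp add: g comp_def gw_0)
    also have "\<dots> = ser_mult (gw u) (gw v) m" by (simp add: msh_T g gw_0)
    finally show "f u * h v * (\<Sum>w\<in>S. of_nat (count_list (dmd u v) w) * gw w m) = f u * h v * ser_mult (gw u) (gw v) m"
      by simp
  qed
  also have "\<dots> = ser_mult (gmap f) (gmap h) m"
    unfolding gmap_def ser_mult_sums ..
  finally show "gmap (diamond f h) m = ser_mult (gmap f) (gmap h) m" .
qed

lemma zero_QSym: "(\<lambda>m. 0) \<in> QSym"
  unfolding QSym_def by (rule CollectI, rule exI[of _ "{}"]) auto

lemma T_QSym: "(T w :: 'a::comm_ring_1 ser) \<in> QSym"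
  unfolding T_def using QSym_lin[OF M_QSym[OF comp_Bk] zero_QSym, of "cf w" w] by simp

lemma gw_QSym: "(gw w :: 'a::comm_ring_1 ser) \<in> QSym"
  by (auto simp: gw_def T_QSym zero_QSym split: list.splits)

lemma sum_QSym:
  fixes c :: "'b \<Rightarrow> 'a::comm_ring_1"
  assumes "finite S" "\<And>w. w \<in> S \<Longrightarrow> H w \<in> QSym"
  shows "(\<lambda>m. \<Sum>w\<in>S. c w * H w m) \<in> QSym"
  using assms
proof (induction S rule: finite_induct)
  case empty then show ?case using zero_QSym by simp
next
  case (insert x F)
  have "(\<lambda>m. c x * H x m + (\<Sum>w\<in>F. c w * H w m)) \<in> QSym"
    using insert by (intro QSym_lin) auto
  then show ?case using insert by simp
qed

lemma gmap_QSym: "finite (wsupp f) \<Longrightarrow> gmap f \<in> QSym"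
  unfolding gmap_def by (rule sum_QSym) (auto simp: gw_QSym)

lemma comp_theta_facts:
  assumes "is_comp \<alpha>"
  shows "good (theta \<alpha>)" "sgn (theta \<alpha>) = 1" "Bk (theta \<alpha>) = \<alpha>"
proof -
  have pos: "\<forall>x\<in>set (theta \<alpha>). 0 < x" by (rule comp_theta_pos[OF assms])
  show "good (theta \<alpha>)" using pos by (cases "theta \<alpha>") (auto simp: good_def)
  have "count_list (theta \<alpha>) 0 = 0" using pos by (auto simp: count_list_0_iff)
  then show "sgn (theta \<alpha>) = 1" by (simp add: sgn_def)
  have "sk (theta \<alpha>) = theta \<alpha>" using pos by (auto simp: sk_def intro: filter_True)
  moreover have "map Nat (theta \<alpha>) = \<alpha>"
    using assms by (auto simp: is_comp_def theta_th th_def intro!: map_idI)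
  ultimately show "Bk (theta \<alpha>) = \<alpha>" by (simp add: Bk_def)
qed

lemma gmap_phi:
  fixes F :: "'a::comm_ring_1 ser"
  assumes "F \<in> QSym"
  shows "gmap (phi F) = F"
proof
  fix m
  have w: "wc F" and c: "csupp F \<subseteq> {\<alpha>. is_comp \<alpha>}" using assms by (auto simp: QSym_eq)
  have fF: "finite (csupp F)" using w by (simp add: wc_def)
  have "gmap (phi F) m = (\<Sum>\<alpha>\<in>csupp F. phi F (0 # theta \<alpha>) * gw (0 # theta \<alpha>) m)"
    unfolding gmap_def wsupp_phi[OF fF] by (simp add: sum.reindex[OF theta_inj_on(1)])
  also have "\<dots> = (\<Sum>\<alpha>\<in>csupp F. coeffM F \<alpha> * M \<alpha> m)"
  proof (intro sum.cong refl)
    fix \<alpha> assume a: "\<alpha> \<in> csupp F"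
    then have "is_comp \<alpha>" using c by auto
    then show "phi F (0 # theta \<alpha>) * gw (0 # theta \<alpha>) m = coeffM F \<alpha> * M \<alpha> m"
      using a by (simp add: phi_at[OF fF] gw_0 T_def cf_def comp_theta_facts)
  qed
  also have "\<dots> = F m" using wc_repr[OF w] by metis
  finally show "gmap (phi F) m = F m" .
qed



definition splits :: "'b list \<Rightarrow> ('b list \<times> 'b list) list" where
  "splits B = map (\<lambda>j. (take j B, drop j B)) [0..<Suc (length B)]"

lemma upt_Suc_Suc: "[0..<Suc (Suc n)] = 0 # map Suc [0..<Suc n]"
  by (simp only: upt_conv_Cons[of 0 "Suc (Suc n)"] map_Suc_upt zero_less_Suc)

lemma splits_Nil: "splits [] = [([], [])]"
  by (simp add: splits_def)

lemma splits_Cons: "splits (y # ys) = ([], y # ys) # map (\<lambda>(p, q). (y # p, q)) (splits ys)"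
  unfolding splits_def length_Cons upt_Suc_Suc list.map map_map by (simp add: comp_def del: upt_Suc)

definition Lp :: "nat list \<Rightarrow> (nat list \<times> nat list) list" where
  "Lp w = map (\<lambda>i. (sk (take i w), sk (drop i w))) (filter (\<lambda>i. good (drop i w)) [0..<Suc (length w)])"

lemma Lp_eq: "Lp w = splits (sk w)"
proof (induction w)
  case Nil
  then show ?case by (simp add: Lp_def splits_Nil good_def)
next
  case (Cons x w)
  have e: "Lp (x # w) = (if x = 0 then [] else [([], sk (x # w))]) @
       map (\<lambda>(p, q). (if x = 0 then p else x # p, q)) (Lp w)"
    unfolding Lp_def
    unfolding length_Cons upt_Suc_Suc by (simp add: filter_map comp_def good_def sk_Cons del: upt_Suc)
  show ?case unfolding e Cons.IH
    by (cases "x = 0") (simp_all add: sk_Cons splits_Cons)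
qed

lemma sum_atMost_list: "(\<Sum>i\<le>n. f i) = sum_list (map f [0..<Suc n])"
proof -
  have "{..n} = set [0..<Suc n]" by auto
  then show ?thesis by (simp only: sum_set_upt_conv_sum_list_nat)
qed

lemma good_take: "good w \<Longrightarrow> good (take i w)"
  by (cases w; cases i) (auto simp: good_def)

lemma sgn_take_drop: "(sgn (take i w) :: 'a::comm_ring_1) * sgn (drop i w) = sgn w"
proof -
  have "count_list w 0 = count_list (take i w) 0 + count_list (drop i w) 0"
    by (metis append_take_drop_id count_list_append)
  then show ?thesis by (simp add: sgn_def power_add)
qed

lemma cop:
  fixes X :: "ntilde list \<Rightarrow> ntilde list \<Rightarrow> 'a::comm_ring_1"
  shows "(\<Sum>i\<le>length w. cf (take i w) * cf (drop i w) * X (Bk (take i w)) (Bk (drop i w)))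
     = cf w * (\<Sum>j\<le>length (Bk w). X (take j (Bk w)) (drop j (Bk w)))"
proof (cases "good w")
  case False
  then obtain w' where w: "w = 0 # w'" by (cases w) (auto simp: good_def)
  have "cf (take i w) * cf (drop i w) = (0::'a)" for i
    using w by (cases i) (auto simp: cf_def good_def)
  then show ?thesis using False by (simp add: cf_def)
next
  case True
  have "(\<Sum>i\<le>length w. cf (take i w) * cf (drop i w) * X (Bk (take i w)) (Bk (drop i w)))
      = (\<Sum>i\<le>length w. sgn w * (if good (drop i w) then X (Bk (take i w)) (Bk (drop i w)) else 0))"
    using True good_take[OF True] by (intro sum.cong refl) (simp add: cf_def sgn_take_drop)
  also have "\<dots> = sgn w * sum_list (map (\<lambda>(s, t). X (map Nat s) (map Nat t)) (Lp w))"
    unfolding sum_distrib_left[symmetric] sum_atMost_list Lp_def Bk_def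
    by (simp add: sum_list_map_filter' comp_def Bk_def del: upt_Suc)
  also have "\<dots> = sgn w * (\<Sum>j\<le>length (Bk w). X (take j (Bk w)) (drop j (Bk w)))"
    unfolding Lp_eq splits_def sum_atMost_list
    by (simp add: comp_def Bk_def take_map drop_map del: upt_Suc)
  finally show ?thesis using True by (simp add: cf_def)
qed

lemma coeff_T: "is_ncomp \<gamma> \<Longrightarrow> coeffM (T w :: 'a::comm_ring_1 ser) \<gamma> = (if \<gamma> = Bk w then cf w else 0)"
  by (simp add: coeffM_def T_def M_canon)

lemma wcDelta_T: "wcDelta (T w :: 'a::comm_ring_1 ser) =
   (\<lambda>p. cf w * (\<Sum>i\<le>length (Bk w). M (take i (Bk w)) (fst p) * M (drop i (Bk w)) (snd p)))"
proof (cases "cf w = (0::'a)")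
  case True
  then have "csupp (T w :: 'a ser) = {}" by (auto simp: csupp_def coeff_T)
  then show ?thesis using True by (simp add: wcDelta_def)
next
  case False
  then have "csupp (T w :: 'a ser) = {Bk w}" by (auto simp: csupp_def coeff_T ncomp_Bk split: if_splits)
  then show ?thesis using False by (simp add: wcDelta_def coeff_T ncomp_Bk)
qed

lemma ncomp_take: "is_ncomp \<alpha> \<Longrightarrow> is_ncomp (take i \<alpha>)"
  by (auto simp: is_ncomp_def dest: in_set_takeD)

lemma ncomp_drop: "is_ncomp \<alpha> \<Longrightarrow> is_ncomp (drop i \<alpha>)"
  by (auto simp: is_ncomp_def dest: in_set_dropD)

lemma g_phi_M:
  assumes "(0::'a::comm_ring_1) \<noteq> 1" "is_ncomp \<alpha>"
  shows "gmap (phi (M \<alpha> :: 'a ser)) = T (theta \<alpha>)"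
  by (simp add: phi_M[OF assms(2)] gmap_basis[OF assms(1)] gw_0)

lemma coproduct:
  assumes nt: "(0::'a::comm_ring_1) \<noteq> 1" and a: "is_ncomp \<alpha>"
  shows "wcDelta (gmap (phi (M \<alpha> :: 'a ser))) =
     (\<lambda>p. \<Sum>i\<le>length \<alpha>. tens (gmap (phi (M (take i \<alpha>) :: 'a ser))) (gmap (phi (M (drop i \<alpha>) :: 'a ser))) p)"
proof
  fix p
  let ?w = "theta \<alpha>"
  have "(\<Sum>i\<le>length \<alpha>. tens (gmap (phi (M (take i \<alpha>) :: 'a ser))) (gmap (phi (M (drop i \<alpha>) :: 'a ser))) p)
     = (\<Sum>i\<le>length ?w. cf (take i ?w) * cf (drop i ?w) * (M (Bk (take i ?w)) (fst p) * M (Bk (drop i ?w)) (snd p)))"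
    by (intro sum.cong) (auto simp: g_phi_M[OF nt] ncomp_take ncomp_drop a tens_def T_def theta_th take_map drop_map mult_ac)
  also have "\<dots> = cf ?w * (\<Sum>j\<le>length (Bk ?w). M (take j (Bk ?w)) (fst p) * M (drop j (Bk ?w)) (snd p))"
    by (rule cop)
  also have "\<dots> = wcDelta (gmap (phi (M \<alpha> :: 'a ser))) p"
    by (simp add: g_phi_M[OF nt a] wcDelta_T)
  finally show "wcDelta (gmap (phi (M \<alpha> :: 'a ser))) p =
     (\<Sum>i\<le>length \<alpha>. tens (gmap (phi (M (take i \<alpha>) :: 'a ser))) (gmap (phi (M (drop i \<alpha>) :: 'a ser))) p)"
    by simp
qed

lemma counit:
  assumes nt: "(0::'a::comm_ring_1) \<noteq> 1" and a: "is_ncomp \<alpha>"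
  shows "wcCounit (gmap (phi (M \<alpha> :: 'a ser))) = (if \<alpha> = [] then 1 else 0)"
proof -
  have "wcCounit (gmap (phi (M \<alpha> :: 'a ser))) = (if [] = Bk (theta \<alpha>) then cf (theta \<alpha>) else 0)"
    by (simp add: wcCounit_def g_phi_M[OF nt a] coeff_T[OF ncomp_Nil])
  also have "\<dots> = (if \<alpha> = [] then 1 else 0)"
  proof (cases \<alpha>)
    case Nil then show ?thesis by (simp add: cf_def good_def Bk_def theta_def)
  next
    case (Cons e \<alpha>')
    then have "theta \<alpha> = th e # theta \<alpha>'" by (simp add: theta_th)
    then show ?thesis using Cons
      by (cases "th e = 0") (auto simp: cf_def good_def Bk_def sk_Cons)
  qed
  finally show ?thesis .
qed


theorem theorem4p5:
  fixes dummy :: "'a::comm_ring_1"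
  assumes nontriv: "(0::'a) \<noteq> 1"
    and rat: "\<And>n::nat. n > 0 \<Longrightarrow> \<exists>y::'a. of_nat n * y = 1"
  shows
    \<comment> \<open>phi is an algebra isomorphism WCQSym \<rightarrow> 1 \<otimes> Sha^+(x) \<subseteq> Sha(x)\<close>
    "OneSha \<subseteq> (Sha :: 'a sh set)
     \<and> (\<forall>\<alpha>. is_ncomp \<alpha> \<longrightarrow> phi (M \<alpha> :: 'a ser) = basis_el (0 # theta \<alpha>))
     \<and> bij_betw phi (WCQSym :: 'a ser set) OneSha
     \<and> (\<forall>F\<in>(WCQSym :: 'a ser set). \<forall>G\<in>WCQSym. \<forall>c::'a.
          phi (\<lambda>m. c * F m + G m) = (\<lambda>w. c * phi F w + phi G w))
     \<and> (\<forall>F\<in>(WCQSym :: 'a ser set). \<forall>G\<in>WCQSym.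
          ser_mult F G \<in> WCQSym \<and> phi (ser_mult F G) = diamond (phi F) (phi G))
     \<and> phi (ser_one :: 'a ser) = basis_el [0]
     \<comment> \<open>psi: WCQSym \<cong> Sha^+(x)\<close>
     \<and> (\<forall>\<alpha>. is_ncomp \<alpha> \<longrightarrow> psi (M \<alpha> :: 'a ser) = basis_el (theta \<alpha>))
     \<and> bij_betw psi (WCQSym :: 'a ser set) ShaPlus
     \<and> (\<forall>F\<in>(WCQSym :: 'a ser set). \<forall>G\<in>WCQSym. \<forall>c::'a.
          psi (\<lambda>m. c * F m + G m) = (\<lambda>w. c * psi F w + psi G w))
     \<and> (\<forall>F\<in>(WCQSym :: 'a ser set). \<forall>G\<in>WCQSym. psi (ser_mult F G) = star (psi F) (psi G))
     \<and> psi (ser_one :: 'a ser) = basis_el []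
     \<comment> \<open>QSym is (via phi) a subalgebra of Sha(x)\<close>
     \<and> phi ` (QSym :: 'a ser set) \<subseteq> Sha
     \<and> basis_el [0] \<in> phi ` (QSym :: 'a ser set)
     \<and> (\<forall>f\<in>phi ` (QSym :: 'a ser set). \<forall>g\<in>phi ` QSym. \<forall>c::'a.
          (\<lambda>w. c * f w + g w) \<in> phi ` QSym \<and> diamond f g \<in> phi ` QSym)
     \<comment> \<open>QSym is a quotient Hopf algebra of 1 \<otimes> Sha^+(x) with the transported structure\<close>
     \<and> (\<exists>g :: 'a sh \<Rightarrow> 'a ser.
          g ` OneSha = QSym
        \<and> (\<forall>f\<in>OneSha. \<forall>h\<in>OneSha. \<forall>c::'a. g (\<lambda>w. c * f w + h w) = (\<lambda>m. c * g f m + g h m))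
        \<and> (\<forall>f\<in>OneSha. \<forall>h\<in>OneSha. g (diamond f h) = ser_mult (g f) (g h))
        \<and> g (phi (ser_one :: 'a ser)) = ser_one
        \<and> (\<forall>\<alpha>. is_ncomp \<alpha> \<longrightarrow>
             wcDelta (g (phi (M \<alpha> :: 'a ser))) =
               (\<lambda>p. \<Sum>i\<le>length \<alpha>. tens (g (phi (M (take i \<alpha>) :: 'a ser)))
                                       (g (phi (M (drop i \<alpha>) :: 'a ser))) p))
        \<and> (\<forall>\<alpha>. is_ncomp \<alpha> \<longrightarrow>
             wcCounit (g (phi (M \<alpha> :: 'a ser))) = (if \<alpha> = [] then 1 else 0)))"
proof -
  have nt: "(0::'a) \<noteq> 1" by (rule nontriv)
  have WC: "\<And>F. F \<in> (WCQSym :: 'a ser set) \<longleftrightarrow> wc F" by (simp add: WCQSym_eq)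
  have O_S: "OneSha \<subseteq> (Sha :: 'a sh set)"
    by (auto simp: OneSha_def Sha_def)
  have p1: "\<forall>\<alpha>. is_ncomp \<alpha> \<longrightarrow> phi (M \<alpha> :: 'a ser) = basis_el (0 # theta \<alpha>)"
    using phi_M by blast
  have p2: "bij_betw phi (WCQSym :: 'a ser set) OneSha"
    unfolding bij_betw_def using phi_inj phi_surj by blast
  have p3: "\<forall>F\<in>(WCQSym :: 'a ser set). \<forall>G\<in>WCQSym. \<forall>c::'a.
          phi (\<lambda>m. c * F m + G m) = (\<lambda>w. c * phi F w + phi G w)"
    using phi_lin WC by blast
  have p4: "\<forall>F\<in>(WCQSym :: 'a ser set). \<forall>G\<in>WCQSym.
          ser_mult F G \<in> WCQSym \<and> phi (ser_mult F G) = diamond (phi F) (phi G)"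
    using wc_mult phi_mult WC by blast
  have p5: "phi (ser_one :: 'a ser) = basis_el [0]"
    by (simp add: ser_one_M phi_M[OF ncomp_Nil] theta_def)
  have q1: "\<forall>\<alpha>. is_ncomp \<alpha> \<longrightarrow> psi (M \<alpha> :: 'a ser) = basis_el (theta \<alpha>)"
    using psi_M by blast
  have q2: "bij_betw psi (WCQSym :: 'a ser set) ShaPlus"
    unfolding bij_betw_def using psi_inj psi_surj by blast
  have q3: "\<forall>F\<in>(WCQSym :: 'a ser set). \<forall>G\<in>WCQSym. \<forall>c::'a.
          psi (\<lambda>m. c * F m + G m) = (\<lambda>w. c * psi F w + psi G w)"
    using psi_lin WC by blast
  have q4: "\<forall>F\<in>(WCQSym :: 'a ser set). \<forall>G\<in>WCQSym. psi (ser_mult F G) = star (psi F) (psi G)"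
    using psi_mult WC by blast
  have q5: "psi (ser_one :: 'a ser) = basis_el []"
    by (simp add: ser_one_M psi_M[OF ncomp_Nil] theta_def)
  have r1: "phi ` (QSym :: 'a ser set) \<subseteq> Sha"
    using O_S phi_OneSha QSym_WCQSym WC wc_fin by blast
  have r2: "basis_el [0] \<in> phi ` (QSym :: 'a ser set)"
  proof (rule image_eqI[of _ _ "ser_one"])
    show "basis_el [0] = phi (ser_one :: 'a ser)" using p5 by simp
    show "(ser_one :: 'a ser) \<in> QSym" unfolding ser_one_M by (rule M_QSym[OF comp_Nil])
  qed
  have r3: "\<forall>f\<in>phi ` (QSym :: 'a ser set). \<forall>g\<in>phi ` QSym. \<forall>c::'a.
          (\<lambda>w. c * f w + g w) \<in> phi ` QSym \<and> diamond f g \<in> phi ` QSym"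
  proof (intro ballI allI conjI)
    fix f g :: "'a sh" and c :: 'a
    assume f: "f \<in> phi ` QSym" and g: "g \<in> phi ` QSym"
    then obtain F G where F: "F \<in> QSym" "f = phi F" and G: "G \<in> QSym" "g = phi G" by auto
    have wF: "wc F" and wG: "wc G" using F G QSym_WCQSym WC by auto
    show "(\<lambda>w. c * f w + g w) \<in> phi ` QSym"
    proof (rule image_eqI[of _ _ "\<lambda>m. c * F m + G m"])
      show "(\<lambda>w. c * f w + g w) = phi (\<lambda>m. c * F m + G m)"
        using phi_lin[OF wF wG, of c] F(2) G(2) by simp
      show "(\<lambda>m. c * F m + G m) \<in> QSym" by (rule QSym_lin[OF F(1) G(1)])
    qed
    show "diamond f g \<in> phi ` QSym"
    proof (rule image_eqI[of _ _ "ser_mult F G"])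
      show "diamond f g = phi (ser_mult F G)"
        using phi_mult[OF wF wG] F(2) G(2) by simp
      show "ser_mult F G \<in> QSym" by (rule QSym_mult[OF F(1) G(1)])
    qed
  qed
  have g1: "gmap ` OneSha = (QSym :: 'a ser set)"
  proof (intro set_eqI iffI)
    fix F :: "'a ser" assume "F \<in> gmap ` OneSha"
    then show "F \<in> QSym" using gmap_QSym by (auto simp: OneSha_def)
  next
    fix F :: "'a ser" assume F: "F \<in> QSym"
    then have "phi F \<in> OneSha" using phi_OneSha QSym_WCQSym WC wc_fin by blast
    then show "F \<in> gmap ` OneSha" using gmap_phi[OF F] by (intro image_eqI[of _ _ "phi F"]) simp_all
  qed
  have g2: "\<forall>f\<in>OneSha. \<forall>h\<in>OneSha. \<forall>c::'a. gmap (\<lambda>w. c * f w + h w) = (\<lambda>m. c * gmap f m + gmap h m)"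
    using gmap_lin by (auto simp: OneSha_def)
  have g3: "\<forall>f\<in>OneSha. \<forall>h\<in>(OneSha :: 'a sh set). gmap (diamond f h) = ser_mult (gmap f) (gmap h)"
    using gmap_diamond by blast
  have g4: "gmap (phi (ser_one :: 'a ser)) = ser_one"
  proof
    fix m
    show "gmap (phi (ser_one :: 'a ser)) m = ser_one m"
      unfolding p5 gmap_basis[OF nt] gw_0 by (simp add: T_def cf_def good_def Bk_def ser_one_M)
  qed
  have g5: "\<forall>\<alpha>. is_ncomp \<alpha> \<longrightarrow>
             wcDelta (gmap (phi (M \<alpha> :: 'a ser))) =
               (\<lambda>p. \<Sum>i\<le>length \<alpha>. tens (gmap (phi (M (take i \<alpha>) :: 'a ser)))
                                       (gmap (phi (M (drop i \<alpha>) :: 'a ser))) p)"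
    using coproduct[OF nt] by blast
  have g6: "\<forall>\<alpha>. is_ncomp \<alpha> \<longrightarrow>
             wcCounit (gmap (phi (M \<alpha> :: 'a ser))) = (if \<alpha> = [] then 1 else 0)"
    using counit[OF nt] by blast
  show ?thesis
    by (intro conjI exI[of _ gmap]; fact O_S p1 p2 p3 p4 p5 q1 q2 q3 q4 q5 r1 r2 r3 g1 g2 g3 g4 g5 g6)
qed

end
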